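(* Let $n \geq 3$ and let $(\lambda(1),\dots,\lambda(n))$ be Kerov's growth process. Let $X_n = c(x)$, where $x$ is the box added to $\lambda(n-1)$ to obtain $\lambda(n)$, and let $T_{n-1} = \frac{\sqrt{\binom{n-1}{2}}\,\chi^{\lambda(n-1)}((12))}{\dim(\lambda(n-1))} = \binom{n-1}{2}^{-1/2}\sum_{y\in\lambda(n-1)} c(y)$. Then \begin{enumerate} \item $\mathbb{E}(|X_n|^3) \leq (n-1)\sqrt{2n-3}$; \item $\mathbb{E}(|T_{n-1}|\,|X_n|^3) \leq (n-1)\sqrt{2n-3}$. \end{enumerate}
   Context: For a partition $\mu$, $\dim(\mu)$ is the dimension of the irreducible representation of the symmetric group indexed by $\mu$ and $\chi^\mu$ its character. Kerov's growth process is the Markov chain $(\lambda(1),\dots,\lambda(n))$ where $\lambda(1)$ is the unique partition of $1$ and, given $\lambda(j)$, the partition $\lambda(j+1)$ of $j+1$ is chosen with probability $\frac{\dim(\lambda(j+1))}{(j+1)\dim(\lambda(j))}$ if $\lambda(j+1)$ is obtained from $\lambda(j)$ by adding a single box, and probability $0$ otherwise; each $\lambda(j)$ is then Plancherel distributed on partitions of $j$. The content of a box $x$ is $c(x) = (\text{column number of } x) - (\text{row number of } x)$. *)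

theory Defs
  imports Complex_Main "HOL-Library.FuncSet"
begin

definition is_partition :: "nat list \<Rightarrow> bool" where
  "is_partition xs \<longleftrightarrow> sorted_wrt (\<ge>) xs \<and> 0 \<notin> set xs"

definition partitions_of :: "nat \<Rightarrow> nat list set" where
  "partitions_of m = {xs. is_partition xs \<and> sum_list xs = m}"

text \<open>Young diagram: box (i,j) in row i, column j (0-indexed; contents are
  unaffected by the index shift).\<close>
definition cells :: "nat list \<Rightarrow> (nat \<times> nat) set" where
  "cells lam = {(i, j). i < length lam \<and> j < lam ! i}"

definition content :: "nat \<times> nat \<Rightarrow> int" where
  "content x = int (snd x) - int (fst x)"

definition adds_box :: "nat list \<Rightarrow> nat list \<Rightarrow> bool" where
  "adds_box lam mu \<longleftrightarrow> (\<exists>x. x \<notin> cells lam \<and> cells mu = insert x (cells lam))"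

definition added_box :: "nat list \<Rightarrow> nat list \<Rightarrow> nat \<times> nat" where
  "added_box lam mu = (THE x. x \<in> cells mu - cells lam)"

text \<open>dim(mu): dimension of the irreducible S_n-representation indexed by mu,
  i.e. the number of standard Young tableaux of shape mu.\<close>
definition SYT :: "nat list \<Rightarrow> ((nat \<times> nat) \<Rightarrow> nat) set" where
  "SYT mu = {f. f \<in> cells mu \<rightarrow>\<^sub>E {1..card (cells mu)} \<and>
     bij_betw f (cells mu) {1..card (cells mu)} \<and>
     (\<forall>i j. (i, Suc j) \<in> cells mu \<longrightarrow> f (i, j) < f (i, Suc j)) \<and>
     (\<forall>i j. (Suc i, j) \<in> cells mu \<longrightarrow> f (i, j) < f (Suc i, j))}"

definition dim :: "nat list \<Rightarrow> nat" where
  "dim mu = card (SYT mu)"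

text \<open>Kerov's growth process of length n: a path is a list ps with
  ps ! k = lambda(k+1) a partition of k+1; its probability is the product of
  transition probabilities dim(lambda(j+1)) / ((j+1) dim(lambda(j))).\<close>
definition kerov_paths :: "nat \<Rightarrow> nat list list set" where
  "kerov_paths n = {ps. length ps = n \<and> (\<forall>k<n. ps ! k \<in> partitions_of (Suc k))}"

definition kerov_prob :: "nat list list \<Rightarrow> real" where
  "kerov_prob ps = (\<Prod>k<length ps - 1.
     (if adds_box (ps ! k) (ps ! Suc k)
      then real (dim (ps ! Suc k)) / (real (k + 2) * real (dim (ps ! k)))
      else 0))"

definition kerov_expect :: "nat \<Rightarrow> (nat list list \<Rightarrow> real) \<Rightarrow> real" where
  "kerov_expect n g = (\<Sum>ps\<in>kerov_paths n. kerov_prob ps * g ps)"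

definition X_of :: "nat \<Rightarrow> nat list list \<Rightarrow> real" where
  "X_of n ps = real_of_int (content (added_box (ps ! (n - 2)) (ps ! (n - 1))))"

definition T_of :: "nat \<Rightarrow> nat list list \<Rightarrow> real" where
  "T_of n ps = (\<Sum>y\<in>cells (ps ! (n - 2)). real_of_int (content y))
                / sqrt (real ((n - 1) choose 2))"

end

theory Submission
  imports Defs
begin

definition dc :: "(nat \<times> nat) set \<Rightarrow> bool" where
  "dc D \<longleftrightarrow> finite D \<and> (\<forall>i j. (Suc i, j) \<in> D \<longrightarrow> (i, j) \<in> D) \<and> (\<forall>i j. (i, Suc j) \<in> D \<longrightarrow> (i, j) \<in> D)"

lemma dc_row: "dc D \<Longrightarrow> (i, j + k) \<in> D \<Longrightarrow> (i, j) \<in> D"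
proof (induction k)
  case 0 then show ?case by simp
next
  case (Suc k)
  have "(i, Suc (j + k)) \<in> D" using Suc.prems by simp
  then have "(i, j + k) \<in> D" using Suc.prems(1) unfolding dc_def by blast
  then show ?case using Suc.IH Suc.prems(1) by blast
qed

lemma dc_col: "dc D \<Longrightarrow> (i + k, j) \<in> D \<Longrightarrow> (i, j) \<in> D"
proof (induction k)
  case 0 then show ?case by simp
next
  case (Suc k)
  have "(Suc (i + k), j) \<in> D" using Suc.prems by simp
  then have "(i + k, j) \<in> D" using Suc.prems(1) unfolding dc_def by blast
  then show ?case using Suc.IH Suc.prems(1) by blast
qed

lemma dc_down:
  assumes "dc D" "(i, j) \<in> D" "i' \<le> i" "j' \<le> j"
  shows "(i', j') \<in> D"
proof -
  obtain a b where "i = i' + a" "j = j' + b" using assms(3,4) le_Suc_ex by blast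
  then show ?thesis using assms(1,2) dc_row dc_col by metis
qed

definition addc :: "(nat \<times> nat) set \<Rightarrow> (nat \<times> nat) set" where
  "addc D = {x. x \<notin> D \<and> dc (insert x D)}"

definition remc :: "(nat \<times> nat) set \<Rightarrow> (nat \<times> nat) set" where
  "remc D = {y \<in> D. dc (D - {y})}"

lemma cells_Sigma: "cells lam = Sigma {..<length lam} (\<lambda>i. {..<lam ! i})"
  by (auto simp: cells_def)

lemma partition_dc:
  assumes "is_partition lam"
  shows "dc (cells lam)"
proof -
  have s: "lam ! Suc i \<le> lam ! i" if "Suc i < length lam" for i
    using assms that unfolding is_partition_def
    by (metis Suc_lessD lessI sorted_wrt_nth_less)
  show ?thesis unfolding dc_def
  proof (intro conjI allI impI)
    show "finite (cells lam)" unfolding cells_Sigma by auto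
  next
    fix i j assume "(Suc i, j) \<in> cells lam"
    then show "(i, j) \<in> cells lam" using s[of i] unfolding cells_def by auto
  next
    fix i j assume "(i, Suc j) \<in> cells lam"
    then show "(i, j) \<in> cells lam" unfolding cells_def by auto
  qed
qed

lemma card_cells: "card (cells lam) = sum_list lam"
proof -
  have "card (cells lam) = (\<Sum>i<length lam. card {..<lam ! i})"
    unfolding cells_Sigma by (rule card_SigmaI) auto
  also have "\<dots> = (\<Sum>i<length lam. lam ! i)" by simp
  also have "\<dots> = sum_list lam" by (simp add: sum_list_sum_nth lessThan_atLeast0)
  finally show ?thesis .
qed

lemma partition_pos: "is_partition lam \<Longrightarrow> i < length lam \<Longrightarrow> lam ! i > 0"
  unfolding is_partition_def by (metis gr0I nth_mem)

lemma rows_cells: "is_partition lam \<Longrightarrow> {i. (i, 0) \<in> cells lam} = {..<length lam}"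
  using partition_pos unfolding cells_def by auto

lemma row_cells: "i < length lam \<Longrightarrow> {j. (i, j) \<in> cells lam} = {..<lam ! i}"
  unfolding cells_def by auto

lemma cells_inj:
  assumes "is_partition a" "is_partition b" "cells a = cells b"
  shows "a = b"
proof -
  have len: "length a = length b"
    using rows_cells[OF assms(1)] rows_cells[OF assms(2)] assms(3)
    by (metis card_lessThan)
  show ?thesis
  proof (rule nth_equalityI[OF len])
    fix i assume "i < length a"
    then show "a ! i = b ! i"
      using row_cells[of i a] row_cells[of i b] len assms(3) by (metis card_lessThan)
  qed
qed

lemma down_nat_set:
  assumes "finite S" "\<And>j j'. j \<in> S \<Longrightarrow> j' \<le> j \<Longrightarrow> j' \<in> S"
  shows "S = {..<card S}"
proof (cases "S = {}")
  case True then show ?thesis by simp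
next
  case False
  have "S = {..Max S}"
    using assms False Max_ge Max_in by blast
  then show ?thesis by (metis card_atMost lessThan_Suc_atMost)
qed

lemma dc_partition:
  assumes "dc D"
  shows "\<exists>lam. is_partition lam \<and> cells lam = D"
proof -
  have fin: "finite D" using assms unfolding dc_def by auto
  define rl where "rl i = card {j. (i, j) \<in> D}" for i
  define nr where "nr = card {i. (i, 0) \<in> D}"
  have finrow: "finite {j. (i, j) \<in> D}" for i
  proof -
    have "{j. (i, j) \<in> D} \<subseteq> snd ` D" by force
    then show ?thesis using fin finite_subset by blast
  qed
  have row: "{j. (i, j) \<in> D} = {..<rl i}" for i
    unfolding rl_def by (rule down_nat_set[OF finrow]) (use dc_down[OF assms] in auto)
  have fincol: "finite {i. (i, 0) \<in> D}"
  proof -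
    have "{i. (i, 0) \<in> D} \<subseteq> fst ` D" by force
    then show ?thesis using fin finite_subset by blast
  qed
  have col: "{i. (i, 0) \<in> D} = {..<nr}"
    unfolding nr_def by (rule down_nat_set[OF fincol]) (use dc_down[OF assms] in auto)
  define lam where "lam = map rl [0..<nr]"
  have mono: "rl j \<le> rl i" if "i \<le> j" for i j
    unfolding rl_def by (rule card_mono[OF finrow]) (use dc_down[OF assms] that in auto)
  have part: "is_partition lam"
    unfolding is_partition_def lam_def
  proof
    show "sorted_wrt (\<ge>) (map rl [0..<nr])"
      unfolding sorted_wrt_iff_nth_less by (auto intro: mono)
  next
    show "0 \<notin> set (map rl [0..<nr])"
    proof
      assume "0 \<in> set (map rl [0..<nr])"
      then obtain i where "i < nr" "rl i = 0" by auto
      then have "(i, 0) \<in> D" using col by auto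
      then have "0 \<in> {..<rl i}" using row by blast
      then show False using \<open>rl i = 0\<close> by simp
    qed
  qed
  have "cells lam = D"
  proof (intro set_eqI iffI)
    fix x assume "x \<in> cells lam"
    then obtain i j where x: "x = (i, j)" "i < nr" "j < rl i" unfolding cells_def lam_def by auto
    then show "x \<in> D" using row by blast
  next
    fix x assume "x \<in> D"
    obtain i j where x: "x = (i, j)" by fastforce
    have "(i, 0) \<in> D" using dc_down[OF assms] \<open>x \<in> D\<close> x by blast
    then have "i < nr" using col by blast
    moreover have "j < rl i" using row \<open>x \<in> D\<close> x by blast
    ultimately show "x \<in> cells lam" unfolding cells_def lam_def x by auto
  qed
  then show ?thesis using part by blast
qed

lemma finite_cells: "finite (cells lam)"
  unfolding cells_Sigma by auto

lemma added_box_eq: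
  assumes "x \<notin> cells lam" "cells mu = insert x (cells lam)"
  shows "added_box lam mu = x"
  unfolding added_box_def using assms by (intro the_equality) auto

lemma adds_box_E:
  assumes "adds_box lam mu"
  shows "added_box lam mu \<notin> cells lam \<and> cells mu = insert (added_box lam mu) (cells lam)"
proof -
  obtain x where "x \<notin> cells lam" "cells mu = insert x (cells lam)"
    using assms unfolding adds_box_def by blast
  then show ?thesis using added_box_eq by metis
qed

lemma T_add:
  assumes "lam \<in> partitions_of m"
  shows "(\<Sum>mu\<in>partitions_of (Suc m). if adds_box lam mu then \<psi> (cells mu) (added_box lam mu) else 0)
       = (\<Sum>x\<in>addc (cells lam). \<psi> (insert x (cells lam)) x)"
proof -
  let ?S = "{mu \<in> partitions_of (Suc m). adds_box lam mu}"
  let ?C = "cells lam"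
  have fin: "finite (partitions_of (Suc m))"
  proof -
    have "partitions_of (Suc m) \<subseteq> {xs. set xs \<subseteq> {..Suc m} \<and> length xs \<le> Suc m}"
    proof
      fix xs assume "xs \<in> partitions_of (Suc m)"
      then have p: "is_partition xs" "sum_list xs = Suc m" unfolding partitions_of_def by auto
      have "set xs \<subseteq> {..Suc m}" using p(2) member_le_sum_list by fastforce
      moreover have "length xs \<le> sum_list xs"
      proof -
        have "\<forall>x\<in>set xs. 1 \<le> x" using p(1) unfolding is_partition_def by (metis less_one not_le)
        then have "sum_list (map (\<lambda>_. 1::nat) xs) \<le> sum_list (map (\<lambda>x. x) xs)"
          by (intro sum_list_mono) auto
        then show ?thesis by (simp add: sum_list_triv)
      qed
      ultimately show "xs \<in> {xs. set xs \<subseteq> {..Suc m} \<and> length xs \<le> Suc m}" using p(2) by auto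
    qed
    moreover have "finite {xs. set xs \<subseteq> {..Suc m} \<and> length xs \<le> Suc m}"
      by (rule finite_lists_length_le) auto
    ultimately show ?thesis by (rule finite_subset)
  qed
  have "(\<Sum>mu\<in>partitions_of (Suc m). if adds_box lam mu then \<psi> (cells mu) (added_box lam mu) else 0)
      = (\<Sum>mu\<in>?S. \<psi> (cells mu) (added_box lam mu))"
    using fin by (simp add: sum.inter_filter)
  also have "\<dots> = (\<Sum>mu\<in>?S. \<psi> (insert (added_box lam mu) ?C) (added_box lam mu))"
    using adds_box_E by (intro sum.cong) auto
  also have "\<dots> = (\<Sum>x\<in>addc ?C. \<psi> (insert x ?C) x)"
  proof (rule sum.reindex_bij_betw)
    show "bij_betw (\<lambda>mu. added_box lam mu) ?S (addc ?C)"
    proof (rule bij_betw_imageI)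
      show "inj_on (\<lambda>mu. added_box lam mu) ?S"
      proof
        fix a b assume "a \<in> ?S" "b \<in> ?S" "added_box lam a = added_box lam b"
        then show "a = b" using adds_box_E[of lam a] adds_box_E[of lam b] cells_inj
          unfolding partitions_of_def by auto
      qed
    next
      show "(\<lambda>mu. added_box lam mu) ` ?S = addc ?C"
      proof (intro set_eqI iffI)
        fix x assume "x \<in> (\<lambda>mu. added_box lam mu) ` ?S"
        then obtain mu where "mu \<in> ?S" "x = added_box lam mu" by blast
        then have "is_partition mu" "adds_box lam mu" unfolding partitions_of_def by auto
        then have a: "x \<notin> ?C" "cells mu = insert x ?C" "dc (cells mu)"
          using adds_box_E[of lam mu] partition_dc[of mu] \<open>x = _\<close> by auto
        then show "x \<in> addc ?C" unfolding addc_def by simp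
      next
        fix x assume x: "x \<in> addc ?C"
        then obtain mu where mu: "is_partition mu" "cells mu = insert x ?C"
          using dc_partition unfolding addc_def by blast
        have "x \<notin> ?C" using x unfolding addc_def by auto
        then have "sum_list mu = Suc m"
          using mu assms card_cells[of mu] card_cells[of lam] finite_cells[of lam]
          unfolding partitions_of_def by auto
        moreover have "adds_box lam mu" using mu \<open>x \<notin> ?C\<close> unfolding adds_box_def by blast
        ultimately have "mu \<in> ?S" using mu unfolding partitions_of_def by auto
        moreover have "added_box lam mu = x" using added_box_eq \<open>x \<notin> ?C\<close> mu by blast
        ultimately show "x \<in> (\<lambda>mu. added_box lam mu) ` ?S" by blast
      qed
    qed
  qed
  finally show ?thesis .
qed

lemma finite_partitions: "finite (partitions_of m)"
proof -
  have "partitions_of m \<subseteq> {xs. set xs \<subseteq> {..m} \<and> length xs \<le> m}"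
  proof
    fix xs assume "xs \<in> partitions_of m"
    then have p: "is_partition xs" "sum_list xs = m" unfolding partitions_of_def by auto
    have "set xs \<subseteq> {..m}" using p(2) member_le_sum_list by fastforce
    moreover have "length xs \<le> sum_list xs"
    proof -
      have "\<forall>x\<in>set xs. 1 \<le> x" using p(1) unfolding is_partition_def by (metis less_one not_le)
      then have "sum_list (map (\<lambda>_. 1::nat) xs) \<le> sum_list (map (\<lambda>x. x) xs)"
        by (intro sum_list_mono) auto
      then show ?thesis by (simp add: sum_list_triv)
    qed
    ultimately show "xs \<in> {xs. set xs \<subseteq> {..m} \<and> length xs \<le> m}" using p(2) by auto
  qed
  moreover have "finite {xs. set xs \<subseteq> {..m} \<and> length xs \<le> m}"
    by (rule finite_lists_length_le) auto
  ultimately show ?thesis by (rule finite_subset)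
qed

lemma T_rem:
  assumes "mu \<in> partitions_of (Suc m)"
  shows "(\<Sum>lam\<in>partitions_of m. if adds_box lam mu then \<psi> (cells lam) else 0)
       = (\<Sum>y\<in>remc (cells mu). \<psi> (cells mu - {y}))"
proof -
  let ?S = "{lam \<in> partitions_of m. adds_box lam mu}"
  let ?C = "cells mu"
  have "(\<Sum>lam\<in>partitions_of m. if adds_box lam mu then \<psi> (cells lam) else 0)
      = (\<Sum>lam\<in>?S. \<psi> (cells lam))"
    using finite_partitions by (simp add: sum.inter_filter)
  also have "\<dots> = (\<Sum>lam\<in>?S. \<psi> (?C - {added_box lam mu}))"
  proof (intro sum.cong refl)
    fix lam assume "lam \<in> ?S"
    then have "added_box lam mu \<notin> cells lam" "?C = insert (added_box lam mu) (cells lam)"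
      using adds_box_E by auto
    then show "\<psi> (cells lam) = \<psi> (?C - {added_box lam mu})" by auto
  qed
  also have "\<dots> = (\<Sum>y\<in>remc ?C. \<psi> (?C - {y}))"
  proof (rule sum.reindex_bij_betw)
    show "bij_betw (\<lambda>lam. added_box lam mu) ?S (remc ?C)"
    proof (rule bij_betw_imageI)
      show "inj_on (\<lambda>lam. added_box lam mu) ?S"
      proof
        fix a b assume ab: "a \<in> ?S" "b \<in> ?S" "added_box a mu = added_box b mu"
        have "cells a = ?C - {added_box a mu}" using adds_box_E[of a mu] ab by auto
        moreover have "cells b = ?C - {added_box b mu}" using adds_box_E[of b mu] ab by auto
        ultimately have "cells a = cells b" using ab by simp
        then show "a = b" using cells_inj ab unfolding partitions_of_def by auto
      qed
    next
      show "(\<lambda>lam. added_box lam mu) ` ?S = remc ?C"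
      proof (intro set_eqI iffI)
        fix x assume "x \<in> (\<lambda>lam. added_box lam mu) ` ?S"
        then obtain lam where l: "lam \<in> ?S" "x = added_box lam mu" by blast
        then have "is_partition lam" "adds_box lam mu" unfolding partitions_of_def by auto
        then have a: "x \<notin> cells lam" "?C = insert x (cells lam)" "dc (cells lam)"
          using adds_box_E[of lam mu] partition_dc[of lam] l by auto
        then have "?C - {x} = cells lam" by auto
        then show "x \<in> remc ?C" unfolding remc_def using a by simp
      next
        fix x assume x: "x \<in> remc ?C"
        then obtain lam where lam: "is_partition lam" "cells lam = ?C - {x}"
          using dc_partition unfolding remc_def by blast
        have "x \<in> ?C" using x unfolding remc_def by auto
        then have "sum_list lam = m"
          using lam assms card_cells[of mu] card_cells[of lam] finite_cells[of mu]
          unfolding partitions_of_def by auto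
        moreover have "adds_box lam mu" using lam \<open>x \<in> ?C\<close> unfolding adds_box_def by blast
        ultimately have "lam \<in> ?S" using lam unfolding partitions_of_def by auto
        moreover have "added_box lam mu = x" using added_box_eq \<open>x \<in> ?C\<close> lam
          by (metis Diff_iff insert_Diff singletonI)
        ultimately show "x \<in> (\<lambda>lam. added_box lam mu) ` ?S" by blast
      qed
    qed
  qed
  finally show ?thesis .
qed

definition sytD :: "(nat \<times> nat) set \<Rightarrow> ((nat \<times> nat) \<Rightarrow> nat) set" where
  "sytD D = {f. f \<in> D \<rightarrow>\<^sub>E {1..card D} \<and>
     bij_betw f D {1..card D} \<and>
     (\<forall>i j. (i, Suc j) \<in> D \<longrightarrow> f (i, j) < f (i, Suc j)) \<and>
     (\<forall>i j. (Suc i, j) \<in> D \<longrightarrow> f (i, j) < f (Suc i, j))}"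

definition dm :: "(nat \<times> nat) set \<Rightarrow> nat" where
  "dm D = card (sytD D)"

lemma dim_dm: "dim mu = dm (cells mu)"
  by (simp add: dim_def dm_def SYT_def sytD_def)

lemma dm_empty: "dm {} = 1"
proof -
  have "sytD {} = {\<lambda>_. undefined}"
  proof (intro set_eqI iffI)
    fix f assume "f \<in> sytD {}"
    then have "f \<in> {} \<rightarrow>\<^sub>E {1..0}" unfolding sytD_def by simp
    then show "f \<in> {\<lambda>_. undefined}" by (simp add: PiE_empty_domain)
  next
    fix f :: "nat \<times> nat \<Rightarrow> nat" assume "f \<in> {\<lambda>_. undefined}"
    then show "f \<in> sytD {}" unfolding sytD_def by (simp add: bij_betw_def)
  qed
  then show ?thesis unfolding dm_def by simp
qed

lemma finite_sytD: "finite D \<Longrightarrow> finite (sytD D)"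
proof -
  assume "finite D"
  have "sytD D \<subseteq> D \<rightarrow>\<^sub>E {1..card D}"
  proof
    fix f assume "f \<in> sytD D"
    then show "f \<in> D \<rightarrow>\<^sub>E {1..card D}" unfolding sytD_def mem_Collect_eq by (elim conjE)
  qed
  then show ?thesis using finite_PiE[OF \<open>finite D\<close>, of "\<lambda>_. {1..card D}"] finite_subset by blast
qed

lemma dc_left: "dc D \<Longrightarrow> (i, Suc j) \<in> D \<Longrightarrow> (i, j) \<in> D"
  unfolding dc_def by blast

lemma dc_up: "dc D \<Longrightarrow> (Suc i, j) \<in> D \<Longrightarrow> (i, j) \<in> D"
  unfolding dc_def by blast

lemma dc_finite: "dc D \<Longrightarrow> finite D"
  unfolding dc_def by blast

lemma remcD:
  assumes "dc D" "(a, b) \<in> remc D"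
  shows "(a, b) \<in> D" "(a, Suc b) \<notin> D" "(Suc a, b) \<notin> D"
proof -
  have d: "dc (D - {(a, b)})" and ab: "(a, b) \<in> D" using assms unfolding remc_def by auto
  show "(a, b) \<in> D" by fact
  show "(a, Suc b) \<notin> D"
  proof
    assume "(a, Suc b) \<in> D"
    then have "(a, Suc b) \<in> D - {(a, b)}" by auto
    then have "(a, b) \<in> D - {(a, b)}" using d by (rule dc_left[rotated])
    then show False by simp
  qed
  show "(Suc a, b) \<notin> D"
  proof
    assume "(Suc a, b) \<in> D"
    then have "(Suc a, b) \<in> D - {(a, b)}" by auto
    then have "(a, b) \<in> D - {(a, b)}" using d by (rule dc_up[rotated])
    then show False by simp
  qed
qed

lemma remcI:
  assumes "dc D" "(a, b) \<in> D" "(a, Suc b) \<notin> D" "(Suc a, b) \<notin> D"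
  shows "(a, b) \<in> remc D"
proof -
  have "dc (D - {(a, b)})"
    unfolding dc_def
  proof (intro conjI allI impI)
    show "finite (D - {(a, b)})" using assms(1) dc_finite by auto
  next
    fix i j assume h: "(Suc i, j) \<in> D - {(a, b)}"
    then have "(i, j) \<in> D" using assms(1) dc_up by blast
    moreover have "(i, j) \<noteq> (a, b)" using h assms(4) by auto
    ultimately show "(i, j) \<in> D - {(a, b)}" by simp
  next
    fix i j assume h: "(i, Suc j) \<in> D - {(a, b)}"
    then have "(i, j) \<in> D" using assms(1) dc_left by blast
    moreover have "(i, j) \<noteq> (a, b)" using h assms(3) by auto
    ultimately show "(i, j) \<in> D - {(a, b)}" by simp
  qed
  then show ?thesis using assms(2) unfolding remc_def by auto
qed

lemma addcD:
  assumes "dc D" "(a, b) \<in> addc D"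
  shows "(a, b) \<notin> D" "\<And>a'. a = Suc a' \<Longrightarrow> (a', b) \<in> D" "\<And>b'. b = Suc b' \<Longrightarrow> (a, b') \<in> D"
proof -
  have d: "dc (insert (a, b) D)" and ab: "(a, b) \<notin> D" using assms unfolding addc_def by auto
  show "(a, b) \<notin> D" by fact
  show "(a', b) \<in> D" if "a = Suc a'" for a'
  proof -
    have "(Suc a', b) \<in> insert (a, b) D" using that by simp
    then have "(a', b) \<in> insert (a, b) D" by (rule dc_up[OF d])
    then show ?thesis using that by simp
  qed
  show "(a, b') \<in> D" if "b = Suc b'" for b'
  proof -
    have "(a, Suc b') \<in> insert (a, b) D" using that by simp
    then have "(a, b') \<in> insert (a, b) D" by (rule dc_left[OF d])
    then show ?thesis using that by simp
  qed
qed

lemma addcI: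
  assumes "dc D" "(a, b) \<notin> D" "\<And>a'. a = Suc a' \<Longrightarrow> (a', b) \<in> D" "\<And>b'. b = Suc b' \<Longrightarrow> (a, b') \<in> D"
  shows "(a, b) \<in> addc D"
proof -
  have "dc (insert (a, b) D)"
    unfolding dc_def
  proof (intro conjI allI impI)
    show "finite (insert (a, b) D)" using assms(1) dc_finite by auto
  next
    fix i j assume h: "(Suc i, j) \<in> insert (a, b) D"
    show "(i, j) \<in> insert (a, b) D"
    proof (cases "(Suc i, j) = (a, b)")
      case True then show ?thesis using assms(3)[of i] by auto
    next
      case False then have "(Suc i, j) \<in> D" using h by auto
      then show ?thesis using assms(1) dc_up by blast
    qed
  next
    fix i j assume h: "(i, Suc j) \<in> insert (a, b) D"
    show "(i, j) \<in> insert (a, b) D"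
    proof (cases "(i, Suc j) = (a, b)")
      case True then show ?thesis using assms(4)[of j] by auto
    next
      case False then have "(i, Suc j) \<in> D" using h by auto
      then show ?thesis using assms(1) dc_left by blast
    qed
  qed
  then show ?thesis using assms(2) unfolding addc_def by auto
qed

lemma syt_range:
  assumes "f \<in> sytD D" "z \<in> D"
  shows "f z \<in> {1..card D}"
  using assms unfolding sytD_def bij_betw_def by auto

lemma syt_inj:
  assumes "f \<in> sytD D"
  shows "inj_on f D"
  using assms unfolding sytD_def bij_betw_def by auto

lemma syt_max_remc:
  assumes "dc D" "f \<in> sytD D" "y \<in> D" "f y = card D"
  shows "y \<in> remc D"
proof -
  obtain a b where y: "y = (a, b)" by fastforce
  have r: "f (a, Suc b) \<le> card D" if "(a, Suc b) \<in> D" using syt_range[OF assms(2) that] by simp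
  have r2: "f (Suc a, b) \<le> card D" if "(Suc a, b) \<in> D" using syt_range[OF assms(2) that] by simp
  have m1: "f (a, b) < f (a, Suc b)" if "(a, Suc b) \<in> D" using assms(2) that unfolding sytD_def by blast
  have m2: "f (a, b) < f (Suc a, b)" if "(Suc a, b) \<in> D" using assms(2) that unfolding sytD_def by blast
  have "(a, Suc b) \<notin> D" using r m1 assms(4) y by force
  moreover have "(Suc a, b) \<notin> D" using r2 m2 assms(4) y by force
  ultimately show ?thesis using remcI[OF assms(1)] assms(3) y by blast
qed

lemma restr_syt:
  assumes "dc D" "y \<in> remc D" "f \<in> sytD D" "f y = card D"
  shows "restrict f (D - {y}) \<in> sytD (D - {y})"
proof -
  let ?N = "card D"
  let ?E = "D - {y}"
  have fin: "finite D" using assms(1) dc_finite by blast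
  have yD: "y \<in> D" using assms(2) unfolding remc_def by auto
  have cE: "card ?E = ?N - 1" using fin yD by simp
  have N1: "?N \<ge> 1" using fin yD by (metis One_nat_def Suc_leI card_gt_0_iff empty_iff)
  have dcE: "dc ?E" using assms(2) unfolding remc_def by auto
  have bij: "bij_betw f D {1..?N}" using assms(3) unfolding sytD_def by blast
  have bijy: "bij_betw f {y} {?N}" using assms(4) by (simp add: bij_betw_def)
  have "bij_betw f ?E ({1..?N} - {?N})"
    by (rule bij_betw_DiffI[OF bij bijy]) (use yD N1 in auto)
  moreover have "{1..?N} - {?N} = {1..card ?E}" using cE N1 by auto
  ultimately have bijE: "bij_betw f ?E {1..card ?E}" by simp
  show ?thesis unfolding sytD_def
  proof (intro CollectI conjI allI impI)
    show "restrict f ?E \<in> ?E \<rightarrow>\<^sub>E {1..card ?E}"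
      using bijE unfolding bij_betw_def by auto
    show "bij_betw (restrict f ?E) ?E {1..card ?E}" using bijE by simp
  next
    fix i j assume h: "(i, Suc j) \<in> ?E"
    then have "(i, j) \<in> ?E" using dcE dc_left by blast
    then show "restrict f ?E (i, j) < restrict f ?E (i, Suc j)"
      using h assms(3) unfolding sytD_def by auto
  next
    fix i j assume h: "(Suc i, j) \<in> ?E"
    then have "(i, j) \<in> ?E" using dcE dc_up by blast
    then show "restrict f ?E (i, j) < restrict f ?E (Suc i, j)"
      using h assms(3) unfolding sytD_def by auto
  qed
qed

lemma ext_syt:
  assumes "dc D" "y \<in> remc D" "g \<in> sytD (D - {y})"
  shows "g(y := card D) \<in> sytD D"
proof -
  let ?N = "card D"
  let ?E = "D - {y}"
  have fin: "finite D" using assms(1) dc_finite by blast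
  have yD: "y \<in> D" using assms(2) unfolding remc_def by auto
  have cE: "card ?E = ?N - 1" using fin yD by simp
  have N1: "?N \<ge> 1" using fin yD by (metis One_nat_def Suc_leI card_gt_0_iff empty_iff)
  have "bij_betw g ?E {1..card ?E}" using assms(3) unfolding sytD_def by blast
  then have bijg: "bij_betw g ?E {1..?N - 1}" using cE by simp
  have b1: "bij_betw (g(y := ?N)) ?E {1..?N - 1}"
  proof -
    have "bij_betw (g(y := ?N)) ?E {1..?N - 1} = bij_betw g ?E {1..?N - 1}"
      by (rule bij_betw_cong) simp
    then show ?thesis using bijg by simp
  qed
  have b2: "bij_betw (g(y := ?N)) {y} {?N}" by (simp add: bij_betw_def)
  have "bij_betw (g(y := ?N)) (?E \<union> {y}) ({1..?N - 1} \<union> {?N})"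
    by (rule bij_betw_combine[OF b1 b2]) auto
  moreover have "?E \<union> {y} = D" using yD by auto
  moreover have "{1..?N - 1} \<union> {?N} = {1..?N}" using N1 by auto
  ultimately have bij: "bij_betw (g(y := ?N)) D {1..?N}" by simp
  have ext: "g \<in> ?E \<rightarrow>\<^sub>E {1..card ?E}" using assms(3) unfolding sytD_def by blast
  obtain a b where y: "y = (a, b)" by fastforce
  have rm: "(a, Suc b) \<notin> D" "(Suc a, b) \<notin> D" using remcD[OF assms(1)] assms(2) y by auto
  have gr: "g z \<in> {1..?N - 1}" if "z \<in> ?E" for z
  proof -
    have "g z \<in> {1..card ?E}" using PiE_mem[OF ext that] .
    then show ?thesis using cE by simp
  qed
  show ?thesis unfolding sytD_def
  proof (intro CollectI conjI allI impI)
    show "g(y := ?N) \<in> D \<rightarrow>\<^sub>E {1..?N}"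
    proof (rule PiE_I)
      fix z assume "z \<in> D"
      show "(g(y := ?N)) z \<in> {1..?N}"
      proof (cases "z = y")
        case True then show ?thesis using N1 by simp
      next
        case False
        then have "g z \<in> {1..?N - 1}" using gr \<open>z \<in> D\<close> by blast
        then have "1 \<le> g z" "g z \<le> ?N" by auto
        then show ?thesis using False by simp
      qed
    next
      fix z assume "z \<notin> D"
      then have "z \<noteq> y" "z \<notin> ?E" using yD by auto
      then show "(g(y := ?N)) z = undefined" using ext by auto
    qed
    show "bij_betw (g(y := ?N)) D {1..?N}" by fact
  next
    fix i j assume h: "(i, Suc j) \<in> D"
    show "(g(y := ?N)) (i, j) < (g(y := ?N)) (i, Suc j)"
    proof (cases "(i, Suc j) = y")
      case True
      then have "(i, j) \<in> ?E" using h dc_left[OF assms(1)] by auto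
      then have "g (i, j) \<le> ?N - 1" using gr by auto
      moreover have "(i, j) \<noteq> y" using True by auto
      ultimately show ?thesis using True N1 by simp
    next
      case False
      then have h2: "(i, Suc j) \<in> ?E" using h by auto
      have dcE: "dc ?E" using assms(2) unfolding remc_def by auto
      have h3: "(i, j) \<in> ?E" using dc_left[OF dcE h2] .
      then have "(i, j) \<noteq> y" by auto
      moreover have "g (i, j) < g (i, Suc j)" using assms(3) h2 unfolding sytD_def by blast
      ultimately show ?thesis using False by simp
    qed
  next
    fix i j assume h: "(Suc i, j) \<in> D"
    show "(g(y := ?N)) (i, j) < (g(y := ?N)) (Suc i, j)"
    proof (cases "(Suc i, j) = y")
      case True
      then have "(i, j) \<in> ?E" using h dc_up[OF assms(1)] by auto
      then have "g (i, j) \<le> ?N - 1" using gr by auto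
      moreover have "(i, j) \<noteq> y" using True by auto
      ultimately show ?thesis using True N1 by simp
    next
      case False
      then have h2: "(Suc i, j) \<in> ?E" using h by auto
      have dcE: "dc ?E" using assms(2) unfolding remc_def by auto
      have h3: "(i, j) \<in> ?E" using dc_up[OF dcE h2] .
      then have "(i, j) \<noteq> y" by auto
      moreover have "g (i, j) < g (Suc i, j)" using assms(3) h2 unfolding sytD_def by blast
      ultimately show ?thesis using False by simp
    qed
  qed
qed

lemma piece_card:
  assumes "dc D" "y \<in> remc D"
  shows "card {f \<in> sytD D. f y = card D} = dm (D - {y})"
proof -
  let ?E = "D - {y}"
  have yD: "y \<in> D" using assms(2) unfolding remc_def by auto
  have "bij_betw (\<lambda>f. restrict f ?E) {f \<in> sytD D. f y = card D} (sytD ?E)"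
  proof (rule bij_betw_byWitness[where f' = "\<lambda>g. g(y := card D)"])
    show "\<forall>f\<in>{f \<in> sytD D. f y = card D}. (restrict f ?E)(y := card D) = f"
    proof
      fix f assume f: "f \<in> {f \<in> sytD D. f y = card D}"
      then have ext: "f \<in> D \<rightarrow>\<^sub>E {1..card D}" unfolding sytD_def by blast
      show "(restrict f ?E)(y := card D) = f"
      proof
        fix z show "((restrict f ?E)(y := card D)) z = f z"
          using f ext yD by (cases "z = y"; cases "z \<in> D") auto
      qed
    qed
    show "\<forall>g\<in>sytD ?E. restrict (g(y := card D)) ?E = g"
    proof
      fix g assume g: "g \<in> sytD ?E"
      then have ext: "g \<in> ?E \<rightarrow>\<^sub>E {1..card ?E}" unfolding sytD_def by blast
      show "restrict (g(y := card D)) ?E = g"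
      proof
        fix z show "restrict (g(y := card D)) ?E z = g z"
          using ext by (cases "z \<in> ?E") auto
      qed
    qed
    show "(\<lambda>f. restrict f ?E) ` {f \<in> sytD D. f y = card D} \<subseteq> sytD ?E"
      using restr_syt[OF assms] by auto
    show "(\<lambda>g. g(y := card D)) ` sytD ?E \<subseteq> {f \<in> sytD D. f y = card D}"
      using ext_syt[OF assms] by auto
  qed
  then show ?thesis unfolding dm_def by (rule bij_betw_same_card)
qed

lemma dm_branch:
  assumes "dc D" "D \<noteq> {}"
  shows "dm D = (\<Sum>y\<in>remc D. dm (D - {y}))"
proof -
  let ?N = "card D"
  let ?P = "\<lambda>y. {f \<in> sytD D. f y = ?N}"
  have fin: "finite D" using assms(1) dc_finite by blast
  have N1: "?N \<ge> 1" using fin assms(2) by (metis One_nat_def Suc_leI card_gt_0_iff)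
  have eq: "sytD D = (\<Union>y\<in>remc D. ?P y)"
  proof (intro set_eqI iffI)
    fix f assume f: "f \<in> sytD D"
    then have "bij_betw f D {1..?N}" unfolding sytD_def by blast
    then have "f ` D = {1..?N}" unfolding bij_betw_def by blast
    then obtain y where y: "y \<in> D" "f y = ?N" using N1
      by (metis atLeastAtMost_iff imageE order_refl)
    then have "y \<in> remc D" using syt_max_remc[OF assms(1) f] by blast
    then show "f \<in> (\<Union>y\<in>remc D. ?P y)" using f y by blast
  qed auto
  have finr: "finite (remc D)" using fin unfolding remc_def by auto
  have "dm D = card (\<Union>y\<in>remc D. ?P y)" unfolding dm_def using eq by simp
  also have "\<dots> = (\<Sum>y\<in>remc D. card (?P y))"
  proof (rule card_UN_disjoint[OF finr])
    show "\<forall>y\<in>remc D. finite (?P y)" using finite_sytD[OF fin] by auto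
    show "\<forall>y\<in>remc D. \<forall>z\<in>remc D. y \<noteq> z \<longrightarrow> ?P y \<inter> ?P z = {}"
    proof (intro ballI impI)
      fix y z assume yz: "y \<in> remc D" "z \<in> remc D" "y \<noteq> z"
      show "?P y \<inter> ?P z = {}"
      proof (rule ccontr)
        assume "?P y \<inter> ?P z \<noteq> {}"
        then obtain f where f: "f \<in> sytD D" "f y = ?N" "f z = ?N" by blast
        have "y \<in> D" "z \<in> D" using yz unfolding remc_def by auto
        then have "y = z" using syt_inj[OF f(1)] f(2,3) unfolding inj_on_def by metis
        then show False using yz by simp
      qed
    qed
  qed
  also have "\<dots> = (\<Sum>y\<in>remc D. dm (D - {y}))"
    using piece_card[OF assms(1)] by simp
  finally show ?thesis .
qed

lemma remc_nonempty:
  assumes "dc D" "D \<noteq> {}"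
  shows "remc D \<noteq> {}"
proof -
  have fin: "finite D" using assms(1) dc_finite by blast
  let ?h = "\<lambda>z::nat\<times>nat. fst z + snd z"
  have "Max (?h ` D) \<in> ?h ` D" using fin assms(2) by (intro Max_in) auto
  then obtain y where y: "y \<in> D" "?h y = Max (?h ` D)" by auto
  have mx: "?h z \<le> ?h y" if "z \<in> D" for z
  proof -
    have "?h z \<le> Max (?h ` D)" using fin that by (intro Max_ge) auto
    then show ?thesis using y(2) by simp
  qed
  obtain a b where ab: "y = (a, b)" by fastforce
  have "(a, Suc b) \<notin> D"
  proof
    assume "(a, Suc b) \<in> D"
    from mx[OF this] show False using ab by simp
  qed
  moreover have "(Suc a, b) \<notin> D"
  proof
    assume "(Suc a, b) \<in> D"
    from mx[OF this] show False using ab by simp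
  qed
  ultimately have "y \<in> remc D" using remcI[OF assms(1)] y(1) ab by blast
  then show ?thesis by blast
qed

lemma dm_pos: "dc D \<Longrightarrow> dm D > 0"
proof (induction "card D" arbitrary: D)
  case 0
  then have "D = {}" using dc_finite by auto
  then show ?case by (simp add: dm_empty)
next
  case (Suc m)
  then have ne: "D \<noteq> {}" by auto
  obtain y where y: "y \<in> remc D" using remc_nonempty[OF Suc.prems ne] by blast
  have fin: "finite D" using Suc.prems dc_finite by blast
  have yD: "y \<in> D" using y unfolding remc_def by auto
  have "dc (D - {y})" using y unfolding remc_def by auto
  moreover have "m = card (D - {y})" using Suc.hyps(2) yD fin by simp
  ultimately have "dm (D - {y}) > 0" using Suc.hyps(1) by blast
  moreover have "finite (remc D)" using fin unfolding remc_def by auto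
  ultimately have "(\<Sum>y\<in>remc D. dm (D - {y})) > 0"
    using y by (metis (no_types, lifting) gr0I sum_eq_0_iff)
  then show ?case using dm_branch[OF Suc.prems ne] by simp
qed

lemma dcI:
  assumes "finite D" "\<And>i j. (Suc i, j) \<in> D \<Longrightarrow> (i, j) \<in> D" "\<And>i j. (i, Suc j) \<in> D \<Longrightarrow> (i, j) \<in> D"
  shows "dc D"
  using assms unfolding dc_def by blast

lemma finite_addc:
  assumes "dc D"
  shows "finite (addc D)"
proof -
  have "addc D \<subseteq> insert (0, 0) ((\<lambda>(i, j). (Suc i, j)) ` D \<union> (\<lambda>(i, j). (i, Suc j)) ` D)"
  proof
    fix x assume x: "x \<in> addc D"
    obtain a b where ab: "x = (a, b)" by fastforce
    show "x \<in> insert (0, 0) ((\<lambda>(i, j). (Suc i, j)) ` D \<union> (\<lambda>(i, j). (i, Suc j)) ` D)"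
    proof (cases a)
      case (Suc a')
      then have "(a', b) \<in> D" using addcD(2)[OF assms] x ab by blast
      then have "x \<in> (\<lambda>(i, j). (Suc i, j)) ` D" using ab Suc by force
      then show ?thesis by blast
    next
      case 0
      show ?thesis
      proof (cases b)
        case (Suc b')
        then have "(a, b') \<in> D" using addcD(3)[OF assms] x ab by blast
        then have "x \<in> (\<lambda>(i, j). (i, Suc j)) ` D" using ab Suc by force
        then show ?thesis by blast
      next
        case 0
        then show ?thesis using \<open>a = 0\<close> ab by simp
      qed
    qed
  qed
  moreover have "finite (insert (0, 0) ((\<lambda>(i, j). (Suc i, j)) ` D \<union> (\<lambda>(i, j). (i, Suc j)) ` D))"
    using dc_finite[OF assms] by blast
  ultimately show ?thesis by (rule finite_subset)
qed

lemma finite_remc: "dc D \<Longrightarrow> finite (remc D)"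
  using dc_finite unfolding remc_def by auto

lemma cross1:
  assumes "dc D" "y \<in> D" "x \<notin> D" "dc (insert x (D - {y}))"
  shows "x \<in> addc D" "y \<in> remc (insert x D)"
proof -
  have xy: "x \<noteq> y" using assms by auto
  have d: "dc (insert x D)"
  proof (rule dcI)
    show "finite (insert x D)" using dc_finite[OF assms(1)] by simp
  next
    fix i j assume h: "(Suc i, j) \<in> insert x D"
    show "(i, j) \<in> insert x D"
    proof (cases "(Suc i, j) = x")
      case True
      then have "(Suc i, j) \<in> insert x (D - {y})" by simp
      then have "(i, j) \<in> insert x (D - {y})" by (rule dc_up[OF assms(4)])
      then show ?thesis by blast
    next
      case False
      then have "(Suc i, j) \<in> D" using h by simp
      then show ?thesis using dc_up[OF assms(1)] by blast
    qed
  next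
    fix i j assume h: "(i, Suc j) \<in> insert x D"
    show "(i, j) \<in> insert x D"
    proof (cases "(i, Suc j) = x")
      case True
      then have "(i, Suc j) \<in> insert x (D - {y})" by simp
      then have "(i, j) \<in> insert x (D - {y})" by (rule dc_left[OF assms(4)])
      then show ?thesis by blast
    next
      case False
      then have "(i, Suc j) \<in> D" using h by simp
      then show ?thesis using dc_left[OF assms(1)] by blast
    qed
  qed
  then show "x \<in> addc D" using assms(3) unfolding addc_def by simp
  have "insert x D - {y} = insert x (D - {y})" using xy by blast
  then show "y \<in> remc (insert x D)" using assms(2,4) unfolding remc_def by simp
qed

lemma cross2:
  assumes "dc D" "y \<in> D" "x \<notin> D" "dc (insert x (D - {y}))"
  shows "y \<in> remc D" "x \<in> addc (D - {y})"
proof -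
  have d: "dc (D - {y})"
  proof (rule dcI)
    show "finite (D - {y})" using dc_finite[OF assms(1)] by simp
  next
    fix i j assume h: "(Suc i, j) \<in> D - {y}"
    then have "(Suc i, j) \<in> insert x (D - {y})" by simp
    then have "(i, j) \<in> insert x (D - {y})" by (rule dc_up[OF assms(4)])
    moreover have "(i, j) \<in> D" using h dc_up[OF assms(1)] by blast
    ultimately show "(i, j) \<in> D - {y}" using assms(3) by blast
  next
    fix i j assume h: "(i, Suc j) \<in> D - {y}"
    then have "(i, Suc j) \<in> insert x (D - {y})" by simp
    then have "(i, j) \<in> insert x (D - {y})" by (rule dc_left[OF assms(4)])
    moreover have "(i, j) \<in> D" using h dc_left[OF assms(1)] by blast
    ultimately show "(i, j) \<in> D - {y}" using assms(3) by blast
  qed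
  then show "y \<in> remc D" using assms(2) unfolding remc_def by simp
  show "x \<in> addc (D - {y})" using assms(3,4) unfolding addc_def by simp
qed

lemma cross_iff:
  assumes "dc D"
  shows "(x \<in> addc D \<and> y \<in> remc (insert x D) \<and> y \<noteq> x) \<longleftrightarrow> (y \<in> remc D \<and> x \<in> addc (D - {y}) \<and> x \<noteq> y)"
proof
  assume h: "x \<in> addc D \<and> y \<in> remc (insert x D) \<and> y \<noteq> x"
  have xD: "x \<notin> D" using h unfolding addc_def by simp
  have yD: "y \<in> D" using h unfolding remc_def by auto
  have "dc (insert x D - {y})" using h unfolding remc_def by simp
  moreover have "insert x D - {y} = insert x (D - {y})" using h by blast
  ultimately have "dc (insert x (D - {y}))" by simp
  then show "y \<in> remc D \<and> x \<in> addc (D - {y}) \<and> x \<noteq> y" using cross2[OF assms yD xD] h by blast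
next
  assume h: "y \<in> remc D \<and> x \<in> addc (D - {y}) \<and> x \<noteq> y"
  have yD: "y \<in> D" using h unfolding remc_def by simp
  have xD: "x \<notin> D" using h unfolding addc_def by auto
  have "dc (insert x (D - {y}))" using h unfolding addc_def by simp
  then show "x \<in> addc D \<and> y \<in> remc (insert x D) \<and> y \<noteq> x" using cross1[OF assms yD xD] h by blast
qed

definition Fw :: "((nat \<times> nat) \<Rightarrow> real) \<Rightarrow> (nat \<times> nat) set \<Rightarrow> real" where
  "Fw w D = (\<Sum>x\<in>addc D. w x * real (dm (insert x D)))"

lemma dm_insert_split:
  assumes "dc D" "x \<in> addc D"
  shows "real (dm (insert x D)) = real (dm D) + (\<Sum>y\<in>remc (insert x D) - {x}. real (dm (insert x (D - {y}))))"
proof -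
  have xD: "x \<notin> D" and d: "dc (insert x D)" using assms(2) unfolding addc_def by auto
  have fin: "finite (remc (insert x D))" using finite_remc[OF d] .
  have xr: "x \<in> remc (insert x D)" unfolding remc_def using xD assms(1) by simp
  have "dm (insert x D) = (\<Sum>y\<in>remc (insert x D). dm (insert x D - {y}))"
    using dm_branch[OF d] by simp
  then have "real (dm (insert x D)) = (\<Sum>y\<in>remc (insert x D). real (dm (insert x D - {y})))"
    by simp
  also have "\<dots> = real (dm (insert x D - {x})) + (\<Sum>y\<in>remc (insert x D) - {x}. real (dm (insert x D - {y})))"
    by (rule sum.remove[OF fin xr])
  also have "insert x D - {x} = D" using xD by simp
  also have "(\<Sum>y\<in>remc (insert x D) - {x}. real (dm (insert x D - {y}))) = (\<Sum>y\<in>remc (insert x D) - {x}. real (dm (insert x (D - {y}))))"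
  proof (rule sum.cong[OF refl])
    fix y assume "y \<in> remc (insert x D) - {x}"
    then have "insert x D - {y} = insert x (D - {y})" by blast
    then show "real (dm (insert x D - {y})) = real (dm (insert x (D - {y})))" by simp
  qed
  finally show ?thesis .
qed

lemma Fw_minus_split:
  assumes "dc D" "y \<in> remc D"
  shows "Fw w (D - {y}) = w y * real (dm D) + (\<Sum>x\<in>addc (D - {y}) - {y}. w x * real (dm (insert x (D - {y}))))"
proof -
  have yD: "y \<in> D" and d: "dc (D - {y})" using assms(2) unfolding remc_def by auto
  have ya: "y \<in> addc (D - {y})" unfolding addc_def using yD assms(1) by (simp add: insert_absorb)
  have fin: "finite (addc (D - {y}))" using finite_addc[OF d] .
  have "Fw w (D - {y}) = w y * real (dm (insert y (D - {y}))) + (\<Sum>x\<in>addc (D - {y}) - {y}. w x * real (dm (insert x (D - {y}))))"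
    unfolding Fw_def by (rule sum.remove[OF fin ya])
  also have "insert y (D - {y}) = D" using yD by blast
  finally show ?thesis .
qed

lemma cross_sum:
  assumes "dc D"
  shows "(\<Sum>x\<in>addc D. \<Sum>y\<in>remc (insert x D) - {x}. \<phi> x y) = (\<Sum>y\<in>remc D. \<Sum>x\<in>addc (D - {y}) - {y}. \<phi> x y)"
proof -
  let ?A = "Sigma (addc D) (\<lambda>x. remc (insert x D) - {x})"
  let ?B = "Sigma (remc D) (\<lambda>y. addc (D - {y}) - {y})"
  have finA: "finite (addc D)" using finite_addc[OF assms] .
  have finB: "finite (remc D)" using finite_remc[OF assms] .
  have fa: "\<forall>x\<in>addc D. finite (remc (insert x D) - {x})"
  proof
    fix x assume "x \<in> addc D"
    then have "dc (insert x D)" unfolding addc_def by simp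
    then show "finite (remc (insert x D) - {x})" using finite_remc by blast
  qed
  have fb: "\<forall>y\<in>remc D. finite (addc (D - {y}) - {y})"
  proof
    fix y assume "y \<in> remc D"
    then have "dc (D - {y})" unfolding remc_def by simp
    then show "finite (addc (D - {y}) - {y})" using finite_addc by blast
  qed
  have "(\<Sum>x\<in>addc D. \<Sum>y\<in>remc (insert x D) - {x}. \<phi> x y) = (\<Sum>p\<in>?A. \<phi> (fst p) (snd p))"
    using sum.Sigma[OF finA fa, of \<phi>] by (simp add: case_prod_beta)
  also have "?A = prod.swap ` ?B"
  proof (intro set_eqI iffI)
    fix p assume "p \<in> ?A"
    then obtain x y where p: "p = (x, y)" "x \<in> addc D" "y \<in> remc (insert x D) - {x}" by blast
    then have "y \<in> remc D \<and> x \<in> addc (D - {y}) \<and> x \<noteq> y" using cross_iff[OF assms, of x y] by blast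
    then have "(y, x) \<in> ?B" by blast
    then show "p \<in> prod.swap ` ?B" using p by force
  next
    fix p assume "p \<in> prod.swap ` ?B"
    then obtain x y where p: "p = (x, y)" "y \<in> remc D" "x \<in> addc (D - {y}) - {y}" by force
    then have "x \<in> addc D \<and> y \<in> remc (insert x D) \<and> y \<noteq> x" using cross_iff[OF assms, of x y] by blast
    then show "p \<in> ?A" using p by blast
  qed
  also have "(\<Sum>p\<in>prod.swap ` ?B. \<phi> (fst p) (snd p)) = (\<Sum>q\<in>?B. \<phi> (snd q) (fst q))"
    by (subst sum.reindex) (auto simp: inj_on_def)
  also have "\<dots> = (\<Sum>y\<in>remc D. \<Sum>x\<in>addc (D - {y}) - {y}. \<phi> x y)"
    using sum.Sigma[OF finB fb, of "\<lambda>y x. \<phi> x y"] by (simp add: case_prod_beta)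
  finally show ?thesis .
qed

lemma Fw_rec:
  assumes "dc D"
  shows "Fw w D = ((\<Sum>x\<in>addc D. w x) - (\<Sum>y\<in>remc D. w y)) * real (dm D) + (\<Sum>y\<in>remc D. Fw w (D - {y}))"
proof -
  let ?phi = "\<lambda>x y. w x * real (dm (insert x (D - {y})))"
  have "Fw w D = (\<Sum>x\<in>addc D. w x * (real (dm D) + (\<Sum>y\<in>remc (insert x D) - {x}. real (dm (insert x (D - {y}))))))"
    unfolding Fw_def using dm_insert_split[OF assms] by (intro sum.cong) auto
  also have "\<dots> = (\<Sum>x\<in>addc D. w x) * real (dm D) + (\<Sum>x\<in>addc D. \<Sum>y\<in>remc (insert x D) - {x}. ?phi x y)"
    by (simp add: distrib_left sum.distrib sum_distrib_left sum_distrib_right)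
  also have "(\<Sum>x\<in>addc D. \<Sum>y\<in>remc (insert x D) - {x}. ?phi x y) = (\<Sum>y\<in>remc D. \<Sum>x\<in>addc (D - {y}) - {y}. ?phi x y)"
    by (rule cross_sum[OF assms])
  also have "\<dots> = (\<Sum>y\<in>remc D. Fw w (D - {y}) - w y * real (dm D))"
    using Fw_minus_split[OF assms] by (intro sum.cong) auto
  also have "\<dots> = (\<Sum>y\<in>remc D. Fw w (D - {y})) - (\<Sum>y\<in>remc D. w y) * real (dm D)"
    by (simp add: sum_subtractf sum_distrib_right)
  finally show ?thesis by (simp add: algebra_simps)
qed

lemma sum_Int_single:
  "sum g (A \<inter> {p. Q \<and> p = q}) = (if Q \<and> q \<in> A then g q else 0)"
proof -
  have "A \<inter> {p. Q \<and> p = q} = (if Q \<and> q \<in> A then {q} else {})" by auto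
  then show ?thesis by simp
qed

lemma addc_empty: "addc {} = {(0, 0)}"
proof (intro set_eqI iffI)
  fix x assume x: "x \<in> addc {}"
  obtain a b where ab: "x = (a, b)" by fastforce
  have d: "dc {}" unfolding dc_def by simp
  have "a = 0"
  proof (cases a)
    case (Suc a') then show ?thesis using addcD(2)[OF d, of a b a'] x ab by simp
  qed simp
  moreover have "b = 0"
  proof (cases b)
    case (Suc b') then show ?thesis using addcD(3)[OF d, of a b b'] x ab by simp
  qed simp
  ultimately show "x \<in> {(0, 0)}" using ab by simp
next
  fix x :: "nat \<times> nat" assume "x \<in> {(0, 0)}"
  then have x: "x = (0, 0)" by simp
  have d: "dc {}" unfolding dc_def by simp
  show "x \<in> addc {}" unfolding x by (rule addcI[OF d]) auto
qed

lemma remc_empty: "remc {} = {}"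
  unfolding remc_def by simp

lemma content_pair: "content (i, j) = int j - int i"
  by (simp add: content_def)

lemma lap_step:
  fixes f :: "int \<Rightarrow> real"
  assumes dcD: "dc D" and yr: "(a, b) \<in> remc D"
  defines "D0 \<equiv> D - {(a, b)}"
  defines "g \<equiv> \<lambda>z. f (content z)"
  shows "(sum g (addc D) - sum g (remc D)) - (sum g (addc D0) - sum g (remc D0))
         = f (int b - int a + 1) + f (int b - int a - 1) - 2 * f (int b - int a)"
proof -
  let ?y = "(a, b)"
  let ?S = "{(a, Suc b), (Suc a, b)}"
  let ?Pa = "{p. 0 < a \<and> p = (a - 1, b)}"
  let ?Pb = "{p. 0 < b \<and> p = (a, b - 1)}"
  let ?P = "?Pa \<union> ?Pb"
  have yD: "?y \<in> D" and r1: "(a, Suc b) \<notin> D" and r2: "(Suc a, b) \<notin> D"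
    using remcD[OF dcD yr] by auto
  have dc0: "dc D0" using yr unfolding remc_def D0_def by simp
  have fin: "finite D" using dc_finite[OF dcD] .
  have finA: "finite (addc D)" using finite_addc[OF dcD] .
  have finA0: "finite (addc D0)" using finite_addc[OF dc0] .
  have finR: "finite (remc D)" using finite_remc[OF dcD] .
  have finR0: "finite (remc D0)" using finite_remc[OF dc0] .
  have y0: "?y \<notin> D0" unfolding D0_def by simp
  have D0sub: "D0 \<subseteq> D" unfolding D0_def by auto
  have D0eq: "insert ?y D0 = D" unfolding D0_def using yD by blast
  have s1: "addc D0 = insert ?y (addc D - ?S)"
  proof (intro set_eqI iffI)
    fix x assume x: "x \<in> addc D0"
    obtain i j where ij: "x = (i, j)" by fastforce
    show "x \<in> insert ?y (addc D - ?S)"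
    proof (cases "x = ?y")
      case True then show ?thesis by simp
    next
      case False
      have xD0: "(i, j) \<notin> D0" using addcD(1)[OF dc0] x ij by simp
      then have xD: "(i, j) \<notin> D" using False ij unfolding D0_def by auto
      have p1: "(i', j) \<in> D0" if "i = Suc i'" for i' using addcD(2)[OF dc0] x ij that by simp
      have p2: "(i, j') \<in> D0" if "j = Suc j'" for j' using addcD(3)[OF dc0] x ij that by simp
      have "(i, j) \<in> addc D"
        by (rule addcI[OF dcD xD]) (use p1 p2 D0sub in blast)+
      moreover have "(i, j) \<noteq> (a, Suc b)"
      proof
        assume "(i, j) = (a, Suc b)"
        then have "(a, b) \<in> D0" using p2 by simp
        then show False using y0 by simp
      qed
      moreover have "(i, j) \<noteq> (Suc a, b)"
      proof
        assume "(i, j) = (Suc a, b)"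
        then have "(a, b) \<in> D0" using p1 by simp
        then show False using y0 by simp
      qed
      ultimately show ?thesis using ij by simp
    qed
  next
    fix x assume x: "x \<in> insert ?y (addc D - ?S)"
    show "x \<in> addc D0"
    proof (cases "x = ?y")
      case True
      have "dc (insert ?y D0)" using D0eq dcD by simp
      then show ?thesis using True y0 unfolding addc_def by simp
    next
      case False
      then have xa: "x \<in> addc D" "x \<notin> ?S" using x by auto
      obtain i j where ij: "x = (i, j)" by fastforce
      have xD: "(i, j) \<notin> D" using addcD(1)[OF dcD] xa ij by simp
      then have xD0: "(i, j) \<notin> D0" using D0sub by blast
      show ?thesis unfolding ij
      proof (rule addcI[OF dc0 xD0])
        fix i' assume h: "i = Suc i'"
        have "(i', j) \<in> D" using addcD(2)[OF dcD] xa(1) ij h by simp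
        moreover have "(i', j) \<noteq> ?y" using xa(2) ij h by auto
        ultimately show "(i', j) \<in> D0" unfolding D0_def by simp
      next
        fix j' assume h: "j = Suc j'"
        have "(i, j') \<in> D" using addcD(3)[OF dcD] xa(1) ij h by simp
        moreover have "(i, j') \<noteq> ?y" using xa(2) ij h by auto
        ultimately show "(i, j') \<in> D0" unfolding D0_def by simp
      qed
    qed
  qed
  have yA: "?y \<notin> addc D - ?S" using yD unfolding addc_def by simp
  have s2: "remc D = insert ?y (remc D0 - ?P)"
  proof (intro set_eqI iffI)
    fix z assume z: "z \<in> remc D"
    obtain i j where ij: "z = (i, j)" by fastforce
    show "z \<in> insert ?y (remc D0 - ?P)"
    proof (cases "z = ?y")
      case True then show ?thesis by simp
    next
      case False
      have zD: "(i, j) \<in> D" "(i, Suc j) \<notin> D" "(Suc i, j) \<notin> D"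
        using remcD[OF dcD] z ij by auto
      have "(i, j) \<in> D0" using zD(1) False ij unfolding D0_def by simp
      moreover have "(i, Suc j) \<notin> D0" "(Suc i, j) \<notin> D0" using zD D0sub by auto
      ultimately have "(i, j) \<in> remc D0" using remcI[OF dc0] by blast
      moreover have "(i, j) \<notin> ?Pa"
      proof
        assume "(i, j) \<in> ?Pa"
        then have "Suc i = a" "j = b" by auto
        then show False using zD(3) yD by simp
      qed
      moreover have "(i, j) \<notin> ?Pb"
      proof
        assume "(i, j) \<in> ?Pb"
        then have "i = a" "Suc j = b" by auto
        then show False using zD(2) yD by simp
      qed
      ultimately show ?thesis using ij by simp
    qed
  next
    fix z assume z: "z \<in> insert ?y (remc D0 - ?P)"
    show "z \<in> remc D"
    proof (cases "z = ?y")
      case True then show ?thesis using yr by simp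
    next
      case False
      then have zr: "z \<in> remc D0" "z \<notin> ?Pa" "z \<notin> ?Pb" using z by auto
      obtain i j where ij: "z = (i, j)" by fastforce
      have zD: "(i, j) \<in> D0" "(i, Suc j) \<notin> D0" "(Suc i, j) \<notin> D0"
        using remcD[OF dc0] zr(1) ij by auto
      have n1: "(i, Suc j) \<noteq> ?y"
      proof
        assume "(i, Suc j) = ?y"
        then have "(i, j) \<in> ?Pb" by auto
        then show False using zr(3) ij by simp
      qed
      have n2: "(Suc i, j) \<noteq> ?y"
      proof
        assume "(Suc i, j) = ?y"
        then have "(i, j) \<in> ?Pa" by auto
        then show False using zr(2) ij by simp
      qed
      have "(i, j) \<in> D" using zD D0sub by blast
      moreover have "(i, Suc j) \<notin> D" using zD(2) n1 unfolding D0_def by blast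
      moreover have "(Suc i, j) \<notin> D" using zD(3) n2 unfolding D0_def by blast
      ultimately show ?thesis using remcI[OF dcD] ij by blast
    qed
  qed
  have yR: "?y \<notin> remc D0 - ?P" using y0 unfolding remc_def by simp
  have A0: "sum g (addc D0) = g ?y + sum g (addc D - ?S)"
    unfolding s1 using finA yA by (simp add: sum.insert)
  have R: "sum g (remc D) = g ?y + sum g (remc D0 - ?P)"
    unfolding s2 using finR0 yR by (simp add: sum.insert)
  have A: "sum g (addc D) = sum g (addc D - ?S) + (if (a, Suc b) \<in> addc D then g (a, Suc b) else 0)
              + (if (Suc a, b) \<in> addc D then g (Suc a, b) else 0)"
  proof -
    have "sum g (addc D) = sum g (addc D \<inter> ?S) + sum g (addc D - ?S)"
      using finA by (rule sum.Int_Diff)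
    moreover have "sum g (addc D \<inter> ?S) = (if (a, Suc b) \<in> addc D then g (a, Suc b) else 0)
              + (if (Suc a, b) \<in> addc D then g (Suc a, b) else 0)"
    proof -
      have e: "addc D \<inter> ?S = (addc D \<inter> {(a, Suc b)}) \<union> (addc D \<inter> {(Suc a, b)})" by blast
      have "sum g (addc D \<inter> ?S) = sum g (addc D \<inter> {(a, Suc b)}) + sum g (addc D \<inter> {(Suc a, b)})"
        unfolding e by (rule sum.union_disjoint) auto
      moreover have "sum g (addc D \<inter> {(a, Suc b)}) = (if (a, Suc b) \<in> addc D then g (a, Suc b) else 0)"
        by (cases "(a, Suc b) \<in> addc D") auto
      moreover have "sum g (addc D \<inter> {(Suc a, b)}) = (if (Suc a, b) \<in> addc D then g (Suc a, b) else 0)"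
        by (cases "(Suc a, b) \<in> addc D") auto
      ultimately show ?thesis by simp
    qed
    ultimately show ?thesis by simp
  qed
  have R0: "sum g (remc D0) = sum g (remc D0 - ?P) + (if 0 < a \<and> (a - 1, b) \<in> remc D0 then g (a - 1, b) else 0)
              + (if 0 < b \<and> (a, b - 1) \<in> remc D0 then g (a, b - 1) else 0)"
  proof -
    have "sum g (remc D0) = sum g (remc D0 \<inter> ?P) + sum g (remc D0 - ?P)"
      using finR0 by (rule sum.Int_Diff)
    moreover have "sum g (remc D0 \<inter> ?P) = sum g (remc D0 \<inter> ?Pa) + sum g (remc D0 \<inter> ?Pb)"
    proof -
      have e: "remc D0 \<inter> ?P = (remc D0 \<inter> ?Pa) \<union> (remc D0 \<inter> ?Pb)" by blast
      show ?thesis unfolding e by (rule sum.union_disjoint) (use finR0 in auto)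
    qed
    moreover have "sum g (remc D0 \<inter> ?Pa) = (if 0 < a \<and> (a - 1, b) \<in> remc D0 then g (a - 1, b) else 0)"
      by (rule sum_Int_single)
    moreover have "sum g (remc D0 \<inter> ?Pb) = (if 0 < b \<and> (a, b - 1) \<in> remc D0 then g (a, b - 1) else 0)"
      by (rule sum_Int_single)
    ultimately show ?thesis by simp
  qed
  have i1: "(a, Suc b) \<in> addc D \<longleftrightarrow> \<not> (0 < a \<and> (a - 1, Suc b) \<notin> D)"
  proof
    assume h: "(a, Suc b) \<in> addc D"
    show "\<not> (0 < a \<and> (a - 1, Suc b) \<notin> D)"
    proof (cases a)
      case (Suc a') then show ?thesis using addcD(2)[OF dcD h, of a'] by simp
    qed simp
  next
    assume h: "\<not> (0 < a \<and> (a - 1, Suc b) \<notin> D)"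
    show "(a, Suc b) \<in> addc D"
    proof (rule addcI[OF dcD r1])
      fix a' assume "a = Suc a'" then show "(a', Suc b) \<in> D" using h by simp
    next
      fix b' assume "Suc b = Suc b'" then show "(a, b') \<in> D" using yD by simp
    qed
  qed
  have i2: "(Suc a, b) \<in> addc D \<longleftrightarrow> \<not> (0 < b \<and> (Suc a, b - 1) \<notin> D)"
  proof
    assume h: "(Suc a, b) \<in> addc D"
    show "\<not> (0 < b \<and> (Suc a, b - 1) \<notin> D)"
    proof (cases b)
      case (Suc b') then show ?thesis using addcD(3)[OF dcD h, of b'] by simp
    qed simp
  next
    assume h: "\<not> (0 < b \<and> (Suc a, b - 1) \<notin> D)"
    show "(Suc a, b) \<in> addc D"
    proof (rule addcI[OF dcD r2])
      fix a' assume "Suc a = Suc a'" then show "(a', b) \<in> D" using yD by simp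
    next
      fix b' assume "b = Suc b'" then show "(Suc a, b') \<in> D" using h by simp
    qed
  qed
  have i3: "(0 < a \<and> (a - 1, b) \<in> remc D0) \<longleftrightarrow> (0 < a \<and> (a - 1, Suc b) \<notin> D)"
  proof (cases a)
    case 0 then show ?thesis by simp
  next
    case (Suc a')
    have in0: "(a', b) \<in> D0"
    proof -
      have "(a', b) \<in> D" using dc_up[OF dcD] yD Suc by simp
      then show ?thesis unfolding D0_def using Suc by simp
    qed
    have nb: "(Suc a', b) \<notin> D0" using y0 Suc by simp
    have "(a', b) \<in> remc D0 \<longleftrightarrow> (a', Suc b) \<notin> D"
    proof
      assume "(a', b) \<in> remc D0"
      then have "(a', Suc b) \<notin> D0" using remcD(2)[OF dc0] by blast
      moreover have "(a', Suc b) \<noteq> ?y" using Suc by simp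
      ultimately show "(a', Suc b) \<notin> D" unfolding D0_def by simp
    next
      assume "(a', Suc b) \<notin> D"
      then have "(a', Suc b) \<notin> D0" using D0sub by blast
      then show "(a', b) \<in> remc D0" using remcI[OF dc0 in0] nb by blast
    qed
    then show ?thesis using Suc by simp
  qed
  have i4: "(0 < b \<and> (a, b - 1) \<in> remc D0) \<longleftrightarrow> (0 < b \<and> (Suc a, b - 1) \<notin> D)"
  proof (cases b)
    case 0 then show ?thesis by simp
  next
    case (Suc b')
    have in0: "(a, b') \<in> D0"
    proof -
      have "(a, b') \<in> D" using dc_left[OF dcD] yD Suc by simp
      then show ?thesis unfolding D0_def using Suc by simp
    qed
    have nb: "(a, Suc b') \<notin> D0" using y0 Suc by simp
    have "(a, b') \<in> remc D0 \<longleftrightarrow> (Suc a, b') \<notin> D"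
    proof
      assume "(a, b') \<in> remc D0"
      then have "(Suc a, b') \<notin> D0" using remcD(3)[OF dc0] by blast
      moreover have "(Suc a, b') \<noteq> ?y" using Suc by simp
      ultimately show "(Suc a, b') \<notin> D" unfolding D0_def by simp
    next
      assume "(Suc a, b') \<notin> D"
      then have "(Suc a, b') \<notin> D0" using D0sub by blast
      then show "(a, b') \<in> remc D0" using remcI[OF dc0 in0] nb by blast
    qed
    then show ?thesis using Suc by simp
  qed
  have c1: "g (a, Suc b) = f (int b - int a + 1)" unfolding g_def content_pair by (simp add: algebra_simps)
  have c2: "g (Suc a, b) = f (int b - int a - 1)" unfolding g_def content_pair by (simp add: algebra_simps)
  have c3: "0 < a \<Longrightarrow> g (a - 1, b) = f (int b - int a + 1)" unfolding g_def content_pair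
    by (simp add: of_nat_diff algebra_simps)
  have c4: "0 < b \<Longrightarrow> g (a, b - 1) = f (int b - int a - 1)" unfolding g_def content_pair
    by (simp add: of_nat_diff algebra_simps)
  have c0: "g ?y = f (int b - int a)" unfolding g_def content_pair by simp
  have e1: "(if (a, Suc b) \<in> addc D then g (a, Suc b) else 0) + (if 0 < a \<and> (a - 1, b) \<in> remc D0 then g (a - 1, b) else 0)
           = f (int b - int a + 1)"
    using i1 i3 c1 c3 by auto
  have e2: "(if (Suc a, b) \<in> addc D then g (Suc a, b) else 0) + (if 0 < b \<and> (a, b - 1) \<in> remc D0 then g (a, b - 1) else 0)
           = f (int b - int a - 1)"
    using i2 i4 c2 c4 by auto
  show ?thesis
    unfolding A R A0 R0 using e1 e2 c0 by (simp add: algebra_simps)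
qed

lemma lap:
  fixes f :: "int \<Rightarrow> real"
  assumes "dc D"
  shows "(\<Sum>x\<in>addc D. f (content x)) - (\<Sum>y\<in>remc D. f (content y))
         = f 0 + (\<Sum>z\<in>D. f (content z + 1) + f (content z - 1) - 2 * f (content z))"
  using assms
proof (induction "card D" arbitrary: D)
  case 0
  then have "D = {}" using dc_finite by auto
  then show ?case by (simp add: addc_empty remc_empty content_pair)
next
  case (Suc m)
  then have ne: "D \<noteq> {}" by auto
  obtain y where y: "y \<in> remc D" using remc_nonempty[OF Suc.prems ne] by blast
  obtain a b where ab: "y = (a, b)" by fastforce
  have fin: "finite D" using Suc.prems dc_finite by blast
  have yD: "y \<in> D" using y unfolding remc_def by auto
  have dc0: "dc (D - {y})" using y unfolding remc_def by auto
  have "m = card (D - {y})" using Suc.hyps(2) yD fin by simp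
  note IH = Suc.hyps(1)[OF this dc0]
  have st: "((\<Sum>x\<in>addc D. f (content x)) - (\<Sum>y\<in>remc D. f (content y))) -
            ((\<Sum>x\<in>addc (D - {y}). f (content x)) - (\<Sum>y\<in>remc (D - {y}). f (content y)))
         = f (int b - int a + 1) + f (int b - int a - 1) - 2 * f (int b - int a)"
    using lap_step[OF Suc.prems, of a b f] y ab by simp
  have "(\<Sum>z\<in>D. f (content z + 1) + f (content z - 1) - 2 * f (content z))
     = (f (content y + 1) + f (content y - 1) - 2 * f (content y)) + (\<Sum>z\<in>D - {y}. f (content z + 1) + f (content z - 1) - 2 * f (content z))"
    by (rule sum.remove[OF fin yD])
  moreover have "content y = int b - int a" using ab content_pair by simp
  ultimately show ?case using st IH by simp
qed

lemma Fw_card: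
  fixes w :: "nat \<times> nat \<Rightarrow> real"
  assumes P: "\<And>E. dc E \<Longrightarrow> (\<Sum>x\<in>addc E. w x) - (\<Sum>y\<in>remc E. w y) = P (card E)"
  shows "dc D \<Longrightarrow> Fw w D = (\<Sum>k\<le>card D. P k) * real (dm D)"
proof (induction "card D" arbitrary: D)
  case 0
  then have "D = {}" using dc_finite by auto
  then show ?case using Fw_rec[OF 0(2), of w] P[OF 0(2)] by (simp add: remc_empty)
next
  case (Suc m)
  then have ne: "D \<noteq> {}" by auto
  have fin: "finite D" using Suc.prems dc_finite by blast
  have "(\<Sum>y\<in>remc D. Fw w (D - {y})) = (\<Sum>y\<in>remc D. (\<Sum>k\<le>m. P k) * real (dm (D - {y})))"
  proof (rule sum.cong[OF refl])
    fix y assume y: "y \<in> remc D"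
    have yD: "y \<in> D" using y unfolding remc_def by auto
    have dc0: "dc (D - {y})" using y unfolding remc_def by auto
    have "m = card (D - {y})" using Suc.hyps(2) yD fin by simp
    then show "Fw w (D - {y}) = (\<Sum>k\<le>m. P k) * real (dm (D - {y}))"
      using Suc.hyps(1)[OF _ dc0] by simp
  qed
  also have "\<dots> = (\<Sum>k\<le>m. P k) * real (dm D)"
    using dm_branch[OF Suc.prems ne] by (simp add: sum_distrib_left)
  finally have "Fw w D = P (Suc m) * real (dm D) + (\<Sum>k\<le>m. P k) * real (dm D)"
    using Fw_rec[OF Suc.prems, of w] P[OF Suc.prems] Suc.hyps(2) by simp
  then show ?case using Suc.hyps(2)[symmetric] by (simp add: algebra_simps)
qed

definition cr :: "nat \<times> nat \<Rightarrow> real" where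
  "cr x = real_of_int (content x)"

lemma F0: "dc D \<Longrightarrow> Fw (\<lambda>_. 1) D = real (card D + 1) * real (dm D)"
proof -
  assume d: "dc D"
  have "Fw (\<lambda>_. 1) D = (\<Sum>k\<le>card D. (1::real)) * real (dm D)"
  proof (rule Fw_card[OF _ d])
    fix E assume "dc E"
    from lap[OF this, of "\<lambda>_. 1"] show "(\<Sum>x\<in>addc E. (1::real)) - (\<Sum>y\<in>remc E. 1) = 1" by simp
  qed
  then show ?thesis by simp
qed

lemma F1: "dc D \<Longrightarrow> Fw cr D = 0"
proof -
  assume d: "dc D"
  have "Fw cr D = (\<Sum>k\<le>card D. (0::real)) * real (dm D)"
  proof (rule Fw_card[OF _ d])
    fix E assume "dc E"
    from lap[OF this, of "\<lambda>c. real_of_int c"] show "(\<Sum>x\<in>addc E. cr x) - (\<Sum>y\<in>remc E. cr y) = 0"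
      unfolding cr_def by simp
  qed
  then show ?thesis by simp
qed

lemma sum_2k: "(\<Sum>k\<le>m. 2 * real k) = real m * (real m + 1)"
  by (induction m) (simp_all add: algebra_simps)

lemma F2: "dc D \<Longrightarrow> Fw (\<lambda>x. cr x ^ 2) D = real (card D) * (real (card D) + 1) * real (dm D)"
proof -
  assume d: "dc D"
  have "Fw (\<lambda>x. cr x ^ 2) D = (\<Sum>k\<le>card D. 2 * real k) * real (dm D)"
  proof (rule Fw_card[OF _ d])
    fix E assume "dc E"
    from lap[OF this, of "\<lambda>c. real_of_int c ^ 2"]
    have "(\<Sum>x\<in>addc E. cr x ^ 2) - (\<Sum>y\<in>remc E. cr y ^ 2) = (\<Sum>z\<in>E. 2)"
      unfolding cr_def by (simp add: power2_eq_square algebra_simps)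
    then show "(\<Sum>x\<in>addc E. cr x ^ 2) - (\<Sum>y\<in>remc E. cr y ^ 2) = 2 * real (card E)" by simp
  qed
  then show ?thesis using sum_2k by simp
qed

lemma P4: "dc E \<Longrightarrow> (\<Sum>x\<in>addc E. cr x ^ 4) - (\<Sum>y\<in>remc E. cr y ^ 4) = 12 * (\<Sum>z\<in>E. cr z ^ 2) + 2 * real (card E)"
proof -
  assume "dc E"
  from lap[OF this, of "\<lambda>c. real_of_int c ^ 4"]
  have "(\<Sum>x\<in>addc E. cr x ^ 4) - (\<Sum>y\<in>remc E. cr y ^ 4) = (\<Sum>z\<in>E. 12 * cr z ^ 2 + 2)"
    unfolding cr_def by (simp add: power2_eq_square power4_eq_xxxx algebra_simps)
  then show ?thesis by (simp add: sum.distrib sum_distrib_left)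
qed

definition tr :: "nat \<Rightarrow> nat list \<Rightarrow> nat list \<Rightarrow> real" where
  "tr m lam mu = (if adds_box lam mu then real (dim mu) / (real (m + 1) * real (dim lam)) else 0)"

definition PE :: "nat \<Rightarrow> (nat list \<Rightarrow> real) \<Rightarrow> real" where
  "PE m h = (\<Sum>lam\<in>partitions_of m. real (dim lam) ^ 2 / fact m * h lam)"

lemma div_eqI: "(Y::real) \<noteq> 0 \<Longrightarrow> X = c * Y \<Longrightarrow> X / Y = c"
  by simp

lemma markov_aux:
  fixes D K F M h :: real
  assumes "D \<noteq> 0" "K \<noteq> 0" "F \<noteq> 0"
  shows "D ^ 2 / F * (M / (K * D) * h) = D * (M * h / (K * F))"
  using assms by (simp add: field_simps power2_eq_square)

lemma part_dc: "lam \<in> partitions_of m \<Longrightarrow> dc (cells lam)"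
  unfolding partitions_of_def using partition_dc by auto

lemma part_card: "lam \<in> partitions_of m \<Longrightarrow> card (cells lam) = m"
  unfolding partitions_of_def using card_cells by auto

lemma dim_pos: "lam \<in> partitions_of m \<Longrightarrow> dim lam > 0"
  unfolding dim_dm using dm_pos part_dc by blast

lemma branch_part:
  assumes "mu \<in> partitions_of (Suc m)"
  shows "(\<Sum>lam\<in>partitions_of m. if adds_box lam mu then real (dim lam) else 0) = real (dim mu)"
proof -
  have "(\<Sum>lam\<in>partitions_of m. if adds_box lam mu then real (dim lam) else 0)
      = (\<Sum>lam\<in>partitions_of m. if adds_box lam mu then real (dm (cells lam)) else 0)"
    by (intro sum.cong refl) (simp add: dim_dm)
  also have "\<dots> = (\<Sum>y\<in>remc (cells mu). real (dm (cells mu - {y})))"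
    by (rule T_rem[OF assms])
  also have "\<dots> = real (dm (cells mu))"
  proof -
    have "cells mu \<noteq> {}" using part_card[OF assms] by auto
    then show ?thesis using dm_branch[OF part_dc[OF assms]] by simp
  qed
  finally show ?thesis by (simp add: dim_dm)
qed

lemma markov:
  "PE (Suc m) h = PE m (\<lambda>lam. \<Sum>mu\<in>partitions_of (Suc m). tr m lam mu * h mu)"
proof -
  have "PE m (\<lambda>lam. \<Sum>mu\<in>partitions_of (Suc m). tr m lam mu * h mu)
      = (\<Sum>lam\<in>partitions_of m. \<Sum>mu\<in>partitions_of (Suc m).
           (if adds_box lam mu then real (dim lam) else 0) * (real (dim mu) * h mu / fact (Suc m)))"
    unfolding PE_def
  proof (intro sum.cong refl)
    fix lam assume lam: "lam \<in> partitions_of m"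
    have dp: "real (dim lam) > 0" using dim_pos[OF lam] by simp
    show "real (dim lam) ^ 2 / fact m * (\<Sum>mu\<in>partitions_of (Suc m). tr m lam mu * h mu)
        = (\<Sum>mu\<in>partitions_of (Suc m). (if adds_box lam mu then real (dim lam) else 0) * (real (dim mu) * h mu / fact (Suc m)))"
      unfolding sum_distrib_left
    proof (intro sum.cong refl)
      fix mu
      show "real (dim lam) ^ 2 / fact m * (tr m lam mu * h mu)
          = (if adds_box lam mu then real (dim lam) else 0) * (real (dim mu) * h mu / fact (Suc m))"
      proof (cases "adds_box lam mu")
        case True
        have "real (dim lam) ^ 2 / fact m * (real (dim mu) / (real (m + 1) * real (dim lam)) * h mu)
            = real (dim lam) * (real (dim mu) * h mu / (real (m + 1) * fact m))"
          by (rule markov_aux) (use dp in auto)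
        moreover have "fact (Suc m) = real (m + 1) * (fact m :: real)" by simp
        ultimately show ?thesis unfolding tr_def using True by simp
      next
        case False then show ?thesis unfolding tr_def by simp
      qed
    qed
  qed
  also have "\<dots> = (\<Sum>mu\<in>partitions_of (Suc m). \<Sum>lam\<in>partitions_of m.
           (if adds_box lam mu then real (dim lam) else 0) * (real (dim mu) * h mu / fact (Suc m)))"
    by (rule sum.swap)
  also have "\<dots> = (\<Sum>mu\<in>partitions_of (Suc m). real (dim mu) * (real (dim mu) * h mu / fact (Suc m)))"
  proof (intro sum.cong refl)
    fix mu assume mu: "mu \<in> partitions_of (Suc m)"
    show "(\<Sum>lam\<in>partitions_of m. (if adds_box lam mu then real (dim lam) else 0) * (real (dim mu) * h mu / fact (Suc m)))
        = real (dim mu) * (real (dim mu) * h mu / fact (Suc m))"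
      unfolding sum_distrib_right[symmetric] branch_part[OF mu] ..
  qed
  also have "\<dots> = PE (Suc m) h"
    unfolding PE_def by (intro sum.cong refl) (simp add: power2_eq_square)
  finally show ?thesis by simp
qed

lemma PE_cong: "(\<And>lam. lam \<in> partitions_of m \<Longrightarrow> a lam = b lam) \<Longrightarrow> PE m a = PE m b"
  unfolding PE_def by (intro sum.cong) auto

lemma PE_add: "PE m (\<lambda>lam. a lam + b lam) = PE m a + PE m b"
  unfolding PE_def by (simp add: distrib_left sum.distrib)

lemma PE_cmult: "PE m (\<lambda>lam. c * a lam) = c * PE m a"
  unfolding PE_def by (simp add: sum_distrib_left algebra_simps)

lemma tr_sum:
  assumes lam: "lam \<in> partitions_of m"
  shows "(\<Sum>mu\<in>partitions_of (Suc m). tr m lam mu * G (cells mu) (added_box lam mu))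
       = (\<Sum>x\<in>addc (cells lam). real (dm (insert x (cells lam))) * G (insert x (cells lam)) x)
         / (real (m + 1) * real (dm (cells lam)))"
proof -
  let ?C = "cells lam"
  let ?K = "real (m + 1) * real (dm ?C)"
  have "(\<Sum>mu\<in>partitions_of (Suc m). tr m lam mu * G (cells mu) (added_box lam mu))
      = (\<Sum>mu\<in>partitions_of (Suc m). if adds_box lam mu then real (dm (cells mu)) / ?K * G (cells mu) (added_box lam mu) else 0)"
    unfolding tr_def by (intro sum.cong refl) (simp add: dim_dm)
  also have "\<dots> = (\<Sum>x\<in>addc ?C. real (dm (insert x ?C)) / ?K * G (insert x ?C) x)"
    by (rule T_add[OF lam])
  also have "\<dots> = (\<Sum>x\<in>addc ?C. real (dm (insert x ?C)) * G (insert x ?C) x) / ?K"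
    by (simp add: sum_divide_distrib)
  finally show ?thesis .
qed

lemma tr_mom:
  assumes lam: "lam \<in> partitions_of m"
  shows "(\<Sum>mu\<in>partitions_of (Suc m). tr m lam mu * w (added_box lam mu))
       = Fw w (cells lam) / (real (m + 1) * real (dm (cells lam)))"
  using tr_sum[OF lam, of "\<lambda>D x. w x"] unfolding Fw_def by (simp add: mult.commute)

lemma tr_mom0:
  assumes lam: "lam \<in> partitions_of m"
  shows "(\<Sum>mu\<in>partitions_of (Suc m). tr m lam mu) = 1"
proof -
  have "(\<Sum>mu\<in>partitions_of (Suc m). tr m lam mu) = Fw (\<lambda>_. 1) (cells lam) / (real (m + 1) * real (dm (cells lam)))"
    using tr_mom[OF lam, of "\<lambda>_. 1"] by simp
  also have "\<dots> = 1"
  proof (rule div_eqI)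
    show "real (m + 1) * real (dm (cells lam)) \<noteq> 0" using dm_pos[OF part_dc[OF lam]] by simp
    show "Fw (\<lambda>_. 1) (cells lam) = 1 * (real (m + 1) * real (dm (cells lam)))"
      unfolding F0[OF part_dc[OF lam]] part_card[OF lam] by simp
  qed
  finally show ?thesis .
qed

lemma tr_mom1:
  assumes lam: "lam \<in> partitions_of m"
  shows "(\<Sum>mu\<in>partitions_of (Suc m). tr m lam mu * cr (added_box lam mu)) = 0"
  unfolding tr_mom[OF lam] F1[OF part_dc[OF lam]] by simp

lemma tr_mom2:
  assumes lam: "lam \<in> partitions_of m"
  shows "(\<Sum>mu\<in>partitions_of (Suc m). tr m lam mu * cr (added_box lam mu) ^ 2) = real m"
  unfolding tr_mom[OF lam, of "\<lambda>x. cr x ^ 2"]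
proof (rule div_eqI)
  show "real (m + 1) * real (dm (cells lam)) \<noteq> 0" using dm_pos[OF part_dc[OF lam]] by simp
  show "Fw (\<lambda>x. cr x ^ 2) (cells lam) = real m * (real (m + 1) * real (dm (cells lam)))"
    unfolding F2[OF part_dc[OF lam]] part_card[OF lam] by simp
qed

lemma all0_Nil: "\<forall>n\<in>set (x::nat list). n = 0 \<Longrightarrow> 0 \<notin> set x \<Longrightarrow> x = []"
  by (cases x) auto

lemma partitions_0: "partitions_of 0 = {[]}"
  unfolding partitions_of_def is_partition_def by (auto simp: sum_list_eq_0_iff intro: all0_Nil)

lemma dim_Nil: "dim [] = 1"
  unfolding dim_dm cells_def using dm_empty by simp

lemma PE_one: "PE m (\<lambda>_. 1) = 1"
proof (induction m)
  case 0 then show ?case unfolding PE_def by (simp add: partitions_0 dim_Nil)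
next
  case (Suc m)
  have "PE (Suc m) (\<lambda>_. 1) = PE m (\<lambda>lam. \<Sum>mu\<in>partitions_of (Suc m). tr m lam mu * 1)"
    by (rule markov)
  also have "\<dots> = PE m (\<lambda>_. 1)"
    by (rule PE_cong) (simp add: tr_mom0)
  finally show ?case using Suc by simp
qed

lemma PE_const: "PE m (\<lambda>_. c) = c"
  using PE_cmult[of m c "\<lambda>_. 1"] PE_one by simp

definition S1 :: "nat list \<Rightarrow> real" where
  "S1 lam = (\<Sum>z\<in>cells lam. cr z)"

definition S2 :: "nat list \<Rightarrow> real" where
  "S2 lam = (\<Sum>z\<in>cells lam. cr z ^ 2)"

lemma sum_insert_add:
  assumes "lam \<in> partitions_of m" "x \<in> addc (cells lam)"
  shows "(\<Sum>z\<in>insert x (cells lam). g z) = g x + (\<Sum>z\<in>cells lam. g z)"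
proof -
  have "x \<notin> cells lam" using assms(2) unfolding addc_def by simp
  then show ?thesis using finite_cells by (simp add: sum.insert)
qed

lemma PE_S2: "PE m S2 = real m * (real m - 1) / 2"
proof (induction m)
  case 0 then show ?case unfolding PE_def by (simp add: partitions_0 S2_def cells_def)
next
  case (Suc m)
  have "PE (Suc m) S2 = PE m (\<lambda>lam. \<Sum>mu\<in>partitions_of (Suc m). tr m lam mu * S2 mu)"
    by (rule markov)
  also have "\<dots> = PE m (\<lambda>lam. S2 lam + real m)"
  proof (rule PE_cong)
    fix lam assume lam: "lam \<in> partitions_of m"
    let ?C = "cells lam"
    let ?K = "real (m + 1) * real (dm ?C)"
    have "(\<Sum>mu\<in>partitions_of (Suc m). tr m lam mu * S2 mu)
        = (\<Sum>mu\<in>partitions_of (Suc m). tr m lam mu * (\<lambda>D x. \<Sum>z\<in>D. cr z ^ 2) (cells mu) (added_box lam mu))"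
      unfolding S2_def by simp
    also have "\<dots> = (\<Sum>x\<in>addc ?C. real (dm (insert x ?C)) * (\<Sum>z\<in>insert x ?C. cr z ^ 2)) / ?K"
      by (rule tr_sum[OF lam])
    also have "\<dots> = (\<Sum>x\<in>addc ?C. real (dm (insert x ?C)) * (cr x ^ 2 + S2 lam)) / ?K"
      using sum_insert_add[OF lam] unfolding S2_def by (intro arg_cong2[where f = "(/)"] sum.cong) auto
    also have "\<dots> = (Fw (\<lambda>x. cr x ^ 2) ?C + S2 lam * Fw (\<lambda>_. 1) ?C) / ?K"
      unfolding Fw_def by (simp add: distrib_left sum.distrib sum_distrib_left algebra_simps)
    also have "\<dots> = S2 lam + real m"
    proof (rule div_eqI)
      show "?K \<noteq> 0" using dm_pos[OF part_dc[OF lam]] by simp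
      show "Fw (\<lambda>x. cr x ^ 2) ?C + S2 lam * Fw (\<lambda>_. 1) ?C = (S2 lam + real m) * ?K"
        unfolding F2[OF part_dc[OF lam]] F0[OF part_dc[OF lam]] part_card[OF lam]
        by (simp add: algebra_simps)
    qed
    finally show "(\<Sum>mu\<in>partitions_of (Suc m). tr m lam mu * S2 mu) = S2 lam + real m" .
  qed
  also have "\<dots> = PE m S2 + real m" by (simp add: PE_add PE_const)
  finally show ?case using Suc by (simp add: field_simps)
qed

lemma PE_S1sq: "PE m (\<lambda>lam. S1 lam ^ 2) = real m * (real m - 1) / 2"
proof (induction m)
  case 0 then show ?case unfolding PE_def by (simp add: partitions_0 S1_def cells_def)
next
  case (Suc m)
  have "PE (Suc m) (\<lambda>lam. S1 lam ^ 2) = PE m (\<lambda>lam. \<Sum>mu\<in>partitions_of (Suc m). tr m lam mu * S1 mu ^ 2)"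
    by (rule markov)
  also have "\<dots> = PE m (\<lambda>lam. S1 lam ^ 2 + real m)"
  proof (rule PE_cong)
    fix lam assume lam: "lam \<in> partitions_of m"
    let ?C = "cells lam"
    let ?K = "real (m + 1) * real (dm ?C)"
    have "(\<Sum>mu\<in>partitions_of (Suc m). tr m lam mu * S1 mu ^ 2)
        = (\<Sum>mu\<in>partitions_of (Suc m). tr m lam mu * (\<lambda>D x. (\<Sum>z\<in>D. cr z) ^ 2) (cells mu) (added_box lam mu))"
      unfolding S1_def by simp
    also have "\<dots> = (\<Sum>x\<in>addc ?C. real (dm (insert x ?C)) * (\<Sum>z\<in>insert x ?C. cr z) ^ 2) / ?K"
      by (rule tr_sum[OF lam])
    also have "\<dots> = (\<Sum>x\<in>addc ?C. real (dm (insert x ?C)) * (cr x + S1 lam) ^ 2) / ?K"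
    proof -
      have "(\<Sum>x\<in>addc ?C. real (dm (insert x ?C)) * (\<Sum>z\<in>insert x ?C. cr z) ^ 2)
          = (\<Sum>x\<in>addc ?C. real (dm (insert x ?C)) * (cr x + S1 lam) ^ 2)"
      proof (rule sum.cong[OF refl])
        fix x assume x: "x \<in> addc ?C"
        show "real (dm (insert x ?C)) * (\<Sum>z\<in>insert x ?C. cr z) ^ 2 = real (dm (insert x ?C)) * (cr x + S1 lam) ^ 2"
          using sum_insert_add[OF lam x, of cr] unfolding S1_def by simp
      qed
      then show ?thesis by simp
    qed
    also have "\<dots> = (Fw (\<lambda>x. cr x ^ 2) ?C + 2 * S1 lam * Fw cr ?C + S1 lam ^ 2 * Fw (\<lambda>_. 1) ?C) / ?K"
      unfolding Fw_def by (simp add: power2_eq_square distrib_left distrib_right sum.distrib sum_distrib_left algebra_simps)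
    also have "\<dots> = S1 lam ^ 2 + real m"
    proof (rule div_eqI)
      show "?K \<noteq> 0" using dm_pos[OF part_dc[OF lam]] by simp
      show "Fw (\<lambda>x. cr x ^ 2) ?C + 2 * S1 lam * Fw cr ?C + S1 lam ^ 2 * Fw (\<lambda>_. 1) ?C = (S1 lam ^ 2 + real m) * ?K"
        unfolding F2[OF part_dc[OF lam]] F1[OF part_dc[OF lam]] F0[OF part_dc[OF lam]] part_card[OF lam]
        by (simp add: algebra_simps)
    qed
    finally show "(\<Sum>mu\<in>partitions_of (Suc m). tr m lam mu * S1 mu ^ 2) = S1 lam ^ 2 + real m" .
  qed
  also have "\<dots> = PE m (\<lambda>lam. S1 lam ^ 2) + real m" by (simp add: PE_add PE_const)
  finally show ?case using Suc by (simp add: field_simps)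
qed

definition Psi :: "nat \<Rightarrow> real" where
  "Psi m = (\<Sum>lam\<in>partitions_of m. real (dim lam) * Fw (\<lambda>x. cr x ^ 4) (cells lam))"

lemma Psi_0: "Psi 0 = 0"
  unfolding Psi_def Fw_def by (simp add: partitions_0 cells_def addc_empty cr_def content_pair)

lemma up_dim:
  assumes lam: "lam \<in> partitions_of m"
  shows "(\<Sum>mu\<in>partitions_of (Suc m). if adds_box lam mu then real (dim mu) else 0) = real (m + 1) * real (dim lam)"
proof -
  have "(\<Sum>mu\<in>partitions_of (Suc m). if adds_box lam mu then real (dim mu) else 0)
      = (\<Sum>mu\<in>partitions_of (Suc m). if adds_box lam mu then (\<lambda>D x. real (dm D)) (cells mu) (added_box lam mu) else 0)"
    by (intro sum.cong refl) (simp add: dim_dm)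
  also have "\<dots> = (\<Sum>x\<in>addc (cells lam). real (dm (insert x (cells lam))))"
    by (rule T_add[OF lam])
  also have "\<dots> = Fw (\<lambda>_. 1) (cells lam)" unfolding Fw_def by simp
  also have "\<dots> = real (m + 1) * real (dim lam)"
    unfolding F0[OF part_dc[OF lam]] part_card[OF lam] dim_dm by simp
  finally show ?thesis .
qed

lemma Psi_Suc:
  "Psi (Suc m) = fact (Suc m) * (12 * PE (Suc m) S2 + 2 * real (Suc m)) + real (Suc m) * Psi m"
proof -
  let ?w = "\<lambda>x. cr x ^ 4"
  have "Psi (Suc m) = (\<Sum>mu\<in>partitions_of (Suc m). real (dim mu) * ((12 * S2 mu + 2 * real (Suc m)) * real (dim mu)
                        + (\<Sum>y\<in>remc (cells mu). Fw ?w (cells mu - {y}))))"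
    unfolding Psi_def
  proof (intro sum.cong refl)
    fix mu assume mu: "mu \<in> partitions_of (Suc m)"
    show "real (dim mu) * Fw ?w (cells mu) = real (dim mu) * ((12 * S2 mu + 2 * real (Suc m)) * real (dim mu)
                        + (\<Sum>y\<in>remc (cells mu). Fw ?w (cells mu - {y})))"
      using Fw_rec[OF part_dc[OF mu], of ?w] P4[OF part_dc[OF mu]] part_card[OF mu]
      unfolding S2_def dim_dm by simp
  qed
  also have "\<dots> = (\<Sum>mu\<in>partitions_of (Suc m). real (dim mu) ^ 2 * (12 * S2 mu + 2 * real (Suc m)))
                 + (\<Sum>mu\<in>partitions_of (Suc m). real (dim mu) * (\<Sum>y\<in>remc (cells mu). Fw ?w (cells mu - {y})))"
    by (simp add: distrib_left sum.distrib power2_eq_square algebra_simps)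
  also have "(\<Sum>mu\<in>partitions_of (Suc m). real (dim mu) ^ 2 * (12 * S2 mu + 2 * real (Suc m)))
           = fact (Suc m) * PE (Suc m) (\<lambda>mu. 12 * S2 mu + 2 * real (Suc m))"
    unfolding PE_def sum_distrib_left by (intro sum.cong refl) simp
  also have "PE (Suc m) (\<lambda>mu. 12 * S2 mu + 2 * real (Suc m)) = 12 * PE (Suc m) S2 + 2 * real (Suc m)"
    by (simp add: PE_add PE_cmult PE_const)
  also have "(\<Sum>mu\<in>partitions_of (Suc m). real (dim mu) * (\<Sum>y\<in>remc (cells mu). Fw ?w (cells mu - {y})))
           = (\<Sum>mu\<in>partitions_of (Suc m). \<Sum>lam\<in>partitions_of m. if adds_box lam mu then real (dim mu) * Fw ?w (cells lam) else 0)"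
  proof (intro sum.cong refl)
    fix mu assume mu: "mu \<in> partitions_of (Suc m)"
    have "(\<Sum>lam\<in>partitions_of m. if adds_box lam mu then Fw ?w (cells lam) else 0) = (\<Sum>y\<in>remc (cells mu). Fw ?w (cells mu - {y}))"
      by (rule T_rem[OF mu])
    moreover have "real (dim mu) * (\<Sum>lam\<in>partitions_of m. if adds_box lam mu then Fw ?w (cells lam) else 0)
        = (\<Sum>lam\<in>partitions_of m. if adds_box lam mu then real (dim mu) * Fw ?w (cells lam) else 0)"
      unfolding sum_distrib_left by (intro sum.cong refl) simp
    ultimately show "real (dim mu) * (\<Sum>y\<in>remc (cells mu). Fw ?w (cells mu - {y}))
        = (\<Sum>lam\<in>partitions_of m. if adds_box lam mu then real (dim mu) * Fw ?w (cells lam) else 0)"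
      by simp
  qed
  also have "\<dots> = (\<Sum>lam\<in>partitions_of m. \<Sum>mu\<in>partitions_of (Suc m). if adds_box lam mu then real (dim mu) * Fw ?w (cells lam) else 0)"
    by (rule sum.swap)
  also have "\<dots> = (\<Sum>lam\<in>partitions_of m. real (Suc m) * (real (dim lam) * Fw ?w (cells lam)))"
  proof (intro sum.cong refl)
    fix lam assume lam: "lam \<in> partitions_of m"
    have "(\<Sum>mu\<in>partitions_of (Suc m). if adds_box lam mu then real (dim mu) * Fw ?w (cells lam) else 0)
        = (\<Sum>mu\<in>partitions_of (Suc m). (if adds_box lam mu then real (dim mu) else 0) * Fw ?w (cells lam))"
      by (intro sum.cong refl) simp
    also have "\<dots> = (\<Sum>mu\<in>partitions_of (Suc m). if adds_box lam mu then real (dim mu) else 0) * Fw ?w (cells lam)"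
      by (simp add: sum_distrib_right)
    also have "\<dots> = real (Suc m) * (real (dim lam) * Fw ?w (cells lam))"
      unfolding up_dim[OF lam] by simp
    finally show "(\<Sum>mu\<in>partitions_of (Suc m). if adds_box lam mu then real (dim mu) * Fw ?w (cells lam) else 0)
        = real (Suc m) * (real (dim lam) * Fw ?w (cells lam))" .
  qed
  also have "\<dots> = real (Suc m) * Psi m"
    unfolding Psi_def by (simp add: sum_distrib_left)
  finally show ?thesis .
qed

lemma Psi_closed: "Psi m = fact (Suc m) * real m * (2 * real m - 1)"
proof (induction m)
  case 0 then show ?case by (simp add: Psi_0)
next
  case (Suc m)
  have "Psi (Suc m) = fact (Suc m) * (12 * (real (Suc m) * (real (Suc m) - 1) / 2) + 2 * real (Suc m))
                      + real (Suc m) * (fact (Suc m) * real m * (2 * real m - 1))"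
    using Psi_Suc[of m] PE_S2[of "Suc m"] Suc by simp
  also have "\<dots> = fact (Suc m) * (real m + 1) * (2 * real m + 1) * (real m + 2)"
    by (simp only: of_nat_Suc) (simp add: algebra_simps)
  also have "fact (Suc (Suc m)) = (real m + 2) * (fact (Suc m) :: real)"
    by (simp add: algebra_simps)
  then have "fact (Suc m) * (real m + 1) * (2 * real m + 1) * (real m + 2)
        = fact (Suc (Suc m)) * real (Suc m) * (2 * real (Suc m) - 1)"
    by (simp add: algebra_simps)
  finally show ?case .
qed

lemma EX4:
  "PE m (\<lambda>lam. \<Sum>mu\<in>partitions_of (Suc m). tr m lam mu * cr (added_box lam mu) ^ 4) = real m * (2 * real m - 1)"
proof -
  let ?w = "\<lambda>x. cr x ^ 4"
  have "PE m (\<lambda>lam. \<Sum>mu\<in>partitions_of (Suc m). tr m lam mu * cr (added_box lam mu) ^ 4)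
      = (\<Sum>lam\<in>partitions_of m. real (dim lam) ^ 2 / fact m * (Fw ?w (cells lam) / (real (m + 1) * real (dm (cells lam)))))"
    unfolding PE_def using tr_mom[of _ m ?w] by (intro sum.cong refl) simp
  also have "\<dots> = (\<Sum>lam\<in>partitions_of m. real (dim lam) * Fw ?w (cells lam) / fact (Suc m))"
  proof (intro sum.cong refl)
    fix lam assume lam: "lam \<in> partitions_of m"
    have dp: "real (dim lam) \<noteq> 0" using dim_pos[OF lam] by simp
    have "real (dim lam) ^ 2 / fact m * (Fw ?w (cells lam) / (real (m + 1) * real (dim lam)) * 1)
        = real (dim lam) * (Fw ?w (cells lam) * 1 / (real (m + 1) * fact m))"
      by (rule markov_aux) (use dp in auto)
    then have "real (dim lam) ^ 2 / fact m * (Fw ?w (cells lam) / (real (m + 1) * real (dim lam)))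
        = real (dim lam) * Fw ?w (cells lam) / (real (m + 1) * fact m)"
      by simp
    then show "real (dim lam) ^ 2 / fact m * (Fw ?w (cells lam) / (real (m + 1) * real (dm (cells lam))))
        = real (dim lam) * Fw ?w (cells lam) / fact (Suc m)"
      by (simp add: dim_dm algebra_simps)
  qed
  also have "\<dots> = Psi m / fact (Suc m)"
    unfolding Psi_def by (simp add: sum_divide_distrib)
  also have "\<dots> = real m * (2 * real m - 1)"
    unfolding Psi_closed by simp
  finally show ?thesis .
qed

lemma nth_snoc_len: "length ps = m \<Longrightarrow> (ps @ [mu]) ! m = mu"
  by (simp add: nth_append)

lemma finite_kerov_paths: "finite (kerov_paths m)"
proof -
  have "kerov_paths m \<subseteq> {ps. set ps \<subseteq> (\<Union>k\<in>{..m}. partitions_of k) \<and> length ps = m}"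
  proof
    fix ps assume ps: "ps \<in> kerov_paths m"
    have "set ps \<subseteq> (\<Union>k\<in>{..m}. partitions_of k)"
    proof
      fix x assume "x \<in> set ps"
      then obtain k where k: "k < length ps" "ps ! k = x" by (metis in_set_conv_nth)
      then have "k < m" using ps unfolding kerov_paths_def by simp
      then have "x \<in> partitions_of (Suc k)" using ps k unfolding kerov_paths_def by auto
      then show "x \<in> (\<Union>k\<in>{..m}. partitions_of k)" using \<open>k < m\<close> by force
    qed
    then show "ps \<in> {ps. set ps \<subseteq> (\<Union>k\<in>{..m}. partitions_of k) \<and> length ps = m}"
      using ps unfolding kerov_paths_def by simp
  qed
  moreover have "finite {ps. set ps \<subseteq> (\<Union>k\<in>{..m}. partitions_of k) \<and> length ps = m}"
    by (rule finite_lists_length_eq) (simp add: finite_partitions)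
  ultimately show ?thesis by (rule finite_subset)
qed

lemma kerov_paths_Suc:
  "kerov_paths (Suc m) = (\<lambda>(ps, mu). ps @ [mu]) ` (kerov_paths m \<times> partitions_of (Suc m))"
proof (intro set_eqI iffI)
  fix qs assume qs: "qs \<in> kerov_paths (Suc m)"
  then have len: "length qs = Suc m" unfolding kerov_paths_def by simp
  then have qe: "qs = butlast qs @ [last qs]" by (metis append_butlast_last_id list.size(3) nat.distinct(1))
  have "butlast qs \<in> kerov_paths m"
    unfolding kerov_paths_def using qs len by (auto simp: nth_butlast kerov_paths_def)
  moreover have "last qs \<in> partitions_of (Suc m)"
  proof -
    have "qs \<noteq> []" using len by auto
    then have "last qs = qs ! m" using len by (simp add: last_conv_nth)
    then show ?thesis using qs unfolding kerov_paths_def by simp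
  qed
  ultimately show "qs \<in> (\<lambda>(ps, mu). ps @ [mu]) ` (kerov_paths m \<times> partitions_of (Suc m))"
    using qe by force
next
  fix qs assume "qs \<in> (\<lambda>(ps, mu). ps @ [mu]) ` (kerov_paths m \<times> partitions_of (Suc m))"
  then obtain ps mu where q: "qs = ps @ [mu]" "ps \<in> kerov_paths m" "mu \<in> partitions_of (Suc m)" by auto
  have len: "length ps = m" using q(2) unfolding kerov_paths_def by simp
  show "qs \<in> kerov_paths (Suc m)"
    unfolding kerov_paths_def
  proof (intro CollectI conjI allI impI)
    show "length qs = Suc m" using q len by simp
  next
    fix k assume k: "k < Suc m"
    show "qs ! k \<in> partitions_of (Suc k)"
    proof (cases "k < m")
      case True
      then have "qs ! k = ps ! k" using q len by (simp add: nth_append)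
      then show ?thesis using q(2) True unfolding kerov_paths_def by simp
    next
      case False
      then have "k = m" using k by simp
      then show ?thesis using q nth_snoc_len[OF len] by simp
    qed
  qed
qed

lemma kerov_prob_snoc:
  assumes "length ps = Suc k"
  shows "kerov_prob (ps @ [mu]) = kerov_prob ps * tr (Suc k) (ps ! k) mu"
proof -
  let ?f = "\<lambda>qs j. if adds_box (qs ! j) (qs ! Suc j)
      then real (dim (qs ! Suc j)) / (real (j + 2) * real (dim (qs ! j))) else 0"
  have "kerov_prob (ps @ [mu]) = (\<Prod>j<Suc k. ?f (ps @ [mu]) j)"
    unfolding kerov_prob_def using assms by simp
  also have "\<dots> = (\<Prod>j<k. ?f (ps @ [mu]) j) * ?f (ps @ [mu]) k"
    by simp
  also have "(\<Prod>j<k. ?f (ps @ [mu]) j) = (\<Prod>j<k. ?f ps j)"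
  proof (intro prod.cong refl)
    fix j assume "j \<in> {..<k}"
    then have "j < length ps" "Suc j < length ps" using assms by auto
    then show "?f (ps @ [mu]) j = ?f ps j" by (simp add: nth_append)
  qed
  also have "(\<Prod>j<k. ?f ps j) = kerov_prob ps"
    unfolding kerov_prob_def using assms by simp
  also have "?f (ps @ [mu]) k = tr (Suc k) (ps ! k) mu"
    unfolding tr_def using assms by (simp add: nth_append)
  finally show ?thesis .
qed

lemma kerov_sum_Suc:
  assumes "m \<ge> 1"
  shows "(\<Sum>qs\<in>kerov_paths (Suc m). kerov_prob qs * g qs)
       = (\<Sum>ps\<in>kerov_paths m. \<Sum>mu\<in>partitions_of (Suc m). kerov_prob ps * tr m (ps ! (m - 1)) mu * g (ps @ [mu]))"
proof -
  have inj: "inj_on (\<lambda>(ps, mu). ps @ [mu]) (kerov_paths m \<times> partitions_of (Suc m))"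
    by (auto simp: inj_on_def)
  have "(\<Sum>qs\<in>kerov_paths (Suc m). kerov_prob qs * g qs)
      = (\<Sum>p\<in>kerov_paths m \<times> partitions_of (Suc m). kerov_prob (fst p @ [snd p]) * g (fst p @ [snd p]))"
    unfolding kerov_paths_Suc
  proof (rule sum.reindex_cong[OF inj refl])
    fix p assume "p \<in> kerov_paths m \<times> partitions_of (Suc m)"
    show "kerov_prob ((\<lambda>(ps, mu). ps @ [mu]) p) * g ((\<lambda>(ps, mu). ps @ [mu]) p) = kerov_prob (fst p @ [snd p]) * g (fst p @ [snd p])"
      by (cases p) simp
  qed
  also have "\<dots> = (\<Sum>(ps, mu)\<in>kerov_paths m \<times> partitions_of (Suc m). kerov_prob (ps @ [mu]) * g (ps @ [mu]))"
    by (intro sum.cong refl) (simp add: case_prod_beta)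
  also have "\<dots> = (\<Sum>ps\<in>kerov_paths m. \<Sum>mu\<in>partitions_of (Suc m). kerov_prob (ps @ [mu]) * g (ps @ [mu]))"
    by (rule sum.cartesian_product[symmetric])
  also have "\<dots> = (\<Sum>ps\<in>kerov_paths m. \<Sum>mu\<in>partitions_of (Suc m). kerov_prob ps * tr m (ps ! (m - 1)) mu * g (ps @ [mu]))"
  proof (intro sum.cong refl)
    fix ps mu assume ps: "ps \<in> kerov_paths m"
    then have "length ps = Suc (m - 1)" using assms unfolding kerov_paths_def by simp
    then have "kerov_prob (ps @ [mu]) = kerov_prob ps * tr (Suc (m - 1)) (ps ! (m - 1)) mu"
      by (rule kerov_prob_snoc)
    then show "kerov_prob (ps @ [mu]) * g (ps @ [mu]) = kerov_prob ps * tr m (ps ! (m - 1)) mu * g (ps @ [mu])"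
      using assms by simp
  qed
  finally show ?thesis .
qed

lemma partitions_1: "partitions_of 1 = {[1]}"
proof (intro set_eqI iffI)
  fix xs assume xs: "xs \<in> partitions_of 1"
  then have p: "is_partition xs" "sum_list xs = 1" unfolding partitions_of_def by auto
  show "xs \<in> {[1]}"
  proof (cases xs)
    case Nil then show ?thesis using p by simp
  next
    case (Cons a r)
    have "a \<noteq> 0" using p(1) Cons unfolding is_partition_def by auto
    moreover have "a + sum_list r = 1" using p(2) Cons by simp
    ultimately have "a = 1" "sum_list r = 0" by arith+
    moreover have "0 \<notin> set r" using p(1) Cons unfolding is_partition_def by auto
    moreover have "\<forall>n\<in>set r. n = 0" using \<open>sum_list r = 0\<close> by (simp add: sum_list_eq_0_iff)
    ultimately have "r = []" using all0_Nil by blast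
    then show ?thesis using Cons \<open>a = 1\<close> by simp
  qed
next
  fix xs assume "xs \<in> {[1::nat]}"
  then show "xs \<in> partitions_of 1" unfolding partitions_of_def is_partition_def by simp
qed

lemma dim_1: "dim [1] = 1"
proof -
  have "PE 1 (\<lambda>_. 1) = real (dim [1]) ^ 2"
    unfolding PE_def partitions_1 by simp
  then have "real (dim [1]) ^ 2 = 1" using PE_one by simp
  then have "real (dim [1] ^ 2) = real 1" by simp
  then have "dim [1] ^ 2 = 1" by (simp only: of_nat_eq_iff)
  then show ?thesis by simp
qed

lemma dim_1': "dim [Suc 0] = 1"
  using dim_1 by simp

lemma kerov_paths_1: "kerov_paths 1 = {[[1]]}"
proof -
  have "kerov_paths (Suc 0) = (\<lambda>(ps, mu). ps @ [mu]) ` (kerov_paths 0 \<times> partitions_of (Suc 0))"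
    by (rule kerov_paths_Suc)
  moreover have "kerov_paths 0 = {[]}" unfolding kerov_paths_def by auto
  ultimately show ?thesis using partitions_1 by simp
qed

lemma kerov_marg:
  assumes "m \<ge> 1"
  shows "(\<Sum>ps\<in>kerov_paths m. kerov_prob ps * h (ps ! (m - 1))) = PE m h"
  using assms
proof (induction m arbitrary: h rule: nat_induct_at_least)
  case base
  show ?case unfolding kerov_paths_1 PE_def partitions_1 kerov_prob_def by (simp add: dim_1 dim_1')
next
  case (Suc m)
  have "(\<Sum>ps\<in>kerov_paths (Suc m). kerov_prob ps * h (ps ! (Suc m - 1)))
      = (\<Sum>ps\<in>kerov_paths m. \<Sum>mu\<in>partitions_of (Suc m). kerov_prob ps * tr m (ps ! (m - 1)) mu * h ((ps @ [mu]) ! m))"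
    using kerov_sum_Suc[OF Suc.hyps(1)] by simp
  also have "\<dots> = (\<Sum>ps\<in>kerov_paths m. kerov_prob ps * (\<lambda>lam. \<Sum>mu\<in>partitions_of (Suc m). tr m lam mu * h mu) (ps ! (m - 1)))"
  proof (intro sum.cong refl)
    fix ps assume ps: "ps \<in> kerov_paths m"
    then have "length ps = m" unfolding kerov_paths_def by simp
    note e = nth_snoc_len[OF this]
    show "(\<Sum>mu\<in>partitions_of (Suc m). kerov_prob ps * tr m (ps ! (m - 1)) mu * h ((ps @ [mu]) ! m))
        = kerov_prob ps * (\<lambda>lam. \<Sum>mu\<in>partitions_of (Suc m). tr m lam mu * h mu) (ps ! (m - 1))"
      by (simp add: e sum_distrib_left algebra_simps)
  qed
  also have "\<dots> = PE m (\<lambda>lam. \<Sum>mu\<in>partitions_of (Suc m). tr m lam mu * h mu)"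
    by (rule Suc.IH)
  also have "\<dots> = PE (Suc m) h" by (rule markov[symmetric])
  finally show ?case .
qed

lemma kerov_two:
  assumes "m \<ge> 1"
  shows "kerov_expect (Suc m) (\<lambda>ps. G (ps ! (m - 1)) (ps ! m))
       = PE m (\<lambda>lam. \<Sum>mu\<in>partitions_of (Suc m). tr m lam mu * G lam mu)"
proof -
  have "kerov_expect (Suc m) (\<lambda>ps. G (ps ! (m - 1)) (ps ! m))
      = (\<Sum>ps\<in>kerov_paths m. \<Sum>mu\<in>partitions_of (Suc m). kerov_prob ps * tr m (ps ! (m - 1)) mu * G ((ps @ [mu]) ! (m - 1)) ((ps @ [mu]) ! m))"
    unfolding kerov_expect_def by (rule kerov_sum_Suc[OF assms])
  also have "\<dots> = (\<Sum>ps\<in>kerov_paths m. kerov_prob ps * (\<lambda>lam. \<Sum>mu\<in>partitions_of (Suc m). tr m lam mu * G lam mu) (ps ! (m - 1)))"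
  proof (intro sum.cong refl)
    fix ps assume ps: "ps \<in> kerov_paths m"
    then have len: "length ps = m" unfolding kerov_paths_def by simp
    then have "(ps @ [mu]) ! (m - 1) = ps ! (m - 1)" for mu using assms by (simp add: nth_append)
    moreover have "(ps @ [mu]) ! m = mu" for mu using nth_snoc_len[OF len] .
    ultimately show "(\<Sum>mu\<in>partitions_of (Suc m). kerov_prob ps * tr m (ps ! (m - 1)) mu * G ((ps @ [mu]) ! (m - 1)) ((ps @ [mu]) ! m))
        = kerov_prob ps * (\<lambda>lam. \<Sum>mu\<in>partitions_of (Suc m). tr m lam mu * G lam mu) (ps ! (m - 1))"
      by (simp add: sum_distrib_left algebra_simps)
  qed
  also have "\<dots> = PE m (\<lambda>lam. \<Sum>mu\<in>partitions_of (Suc m). tr m lam mu * G lam mu)"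
    by (rule kerov_marg[OF assms])
  finally show ?thesis .
qed

lemma kerov_prob_nonneg: "kerov_prob ps \<ge> 0"
  unfolding kerov_prob_def by (intro prod_nonneg) auto

lemma choose2_real: "real (m choose 2) = real m * (real m - 1) / 2"
proof (induction m)
  case 0 then show ?case by simp
next
  case (Suc m)
  have "Suc m choose 2 = m + (m choose 2)" by (simp add: numeral_2_eq_2)
  then show ?case using Suc by (simp add: field_simps)
qed

lemma wcs:
  fixes p a b :: "'i \<Rightarrow> real"
  assumes fin: "finite A" and p: "\<And>i. i \<in> A \<Longrightarrow> p i \<ge> 0"
  shows "(\<Sum>i\<in>A. p i * (a i * b i)) ^ 2 \<le> (\<Sum>i\<in>A. p i * a i ^ 2) * (\<Sum>i\<in>A. p i * b i ^ 2)"
proof -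
  let ?Sa = "\<Sum>i\<in>A. p i * a i ^ 2"
  let ?Sb = "\<Sum>i\<in>A. p i * b i ^ 2"
  let ?Sab = "\<Sum>i\<in>A. p i * (a i * b i)"
  have Sa0: "?Sa \<ge> 0" using p by (intro sum_nonneg) simp
  have Sb0: "?Sb \<ge> 0" using p by (intro sum_nonneg) simp
  show ?thesis
  proof (cases "?Sb = 0")
    case True
    have "\<forall>i\<in>A. p i * b i ^ 2 = 0"
      using True fin p by (subst sum_nonneg_eq_0_iff[symmetric]) auto
    then have "\<forall>i\<in>A. p i * (a i * b i) = 0" by (auto simp: power2_eq_square)
    then have "?Sab = 0" by (rule sum.neutral)
    then show ?thesis using True by simp
  next
    case False
    then have Sbp: "?Sb > 0" using Sb0 by simp
    define r where "r = ?Sab / ?Sb"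
    have "0 \<le> (\<Sum>i\<in>A. p i * (a i - r * b i) ^ 2)"
      using p by (intro sum_nonneg) simp
    also have "\<dots> = ?Sa - 2 * r * ?Sab + r ^ 2 * ?Sb"
      by (simp add: algebra_simps power2_eq_square sum_distrib_left sum_subtractf flip: sum.distrib)
    also have "\<dots> = ?Sa - ?Sab ^ 2 / ?Sb"
      using Sbp by (simp add: r_def power2_eq_square field_simps)
    finally have "?Sab ^ 2 / ?Sb \<le> ?Sa" by simp
    then show ?thesis using Sbp by (simp add: pos_divide_le_eq)
  qed
qed

lemma abs_cube: "\<bar>x::real\<bar> ^ 3 = \<bar>x\<bar> * x ^ 2"
proof -
  have "\<bar>x\<bar> ^ 3 = \<bar>x\<bar> * \<bar>x\<bar> ^ 2" by (simp add: power3_eq_cube power2_eq_square)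
  then show ?thesis by simp
qed

theorem lemma4:
  fixes n :: nat
  assumes "n \<ge> 3"
  shows "kerov_expect n (\<lambda>ps. \<bar>X_of n ps\<bar> ^ 3) \<le> real (n - 1) * sqrt (2 * real n - 3)
       \<and> kerov_expect n (\<lambda>ps. \<bar>T_of n ps\<bar> * \<bar>X_of n ps\<bar> ^ 3) \<le> real (n - 1) * sqrt (2 * real n - 3)"
proof -
  obtain m where nm: "n = Suc m" using assms by (cases n) auto
  have m2: "m \<ge> 2" using assms nm by simp
  have m1: "m \<ge> 1" using m2 by simp
  let ?A = "kerov_paths n"
  let ?p = "kerov_prob"
  define B where "B = real (m choose 2)"
  have Bv: "B = real m * (real m - 1) / 2" unfolding B_def by (rule choose2_real)
  have Bp: "B > 0" unfolding Bv using m2 by simp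
  have X_eq: "X_of n ps = cr (added_box (ps ! (m - 1)) (ps ! m))" for ps
    unfolding X_of_def cr_def nm by (simp add: numeral_2_eq_2)
  have T_eq: "T_of n ps = S1 (ps ! (m - 1)) / sqrt B" for ps
    unfolding T_of_def S1_def cr_def B_def nm by (simp add: numeral_2_eq_2)
  have fin: "finite ?A" by (rule finite_kerov_paths)
  have pnn: "\<And>ps. ps \<in> ?A \<Longrightarrow> ?p ps \<ge> 0" using kerov_prob_nonneg by blast
  have EX2: "(\<Sum>ps\<in>?A. ?p ps * X_of n ps ^ 2) = real m"
  proof -
    have "(\<Sum>ps\<in>?A. ?p ps * X_of n ps ^ 2)
        = kerov_expect (Suc m) (\<lambda>ps. (\<lambda>lam mu. cr (added_box lam mu) ^ 2) (ps ! (m - 1)) (ps ! m))"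
      unfolding kerov_expect_def X_eq unfolding nm by simp
    also have "\<dots> = PE m (\<lambda>lam. \<Sum>mu\<in>partitions_of (Suc m). tr m lam mu * cr (added_box lam mu) ^ 2)"
      by (rule kerov_two[OF m1])
    also have "\<dots> = PE m (\<lambda>_. real m)"
      by (rule PE_cong) (rule tr_mom2)
    finally show ?thesis by (simp add: PE_const)
  qed
  have EX4: "(\<Sum>ps\<in>?A. ?p ps * (X_of n ps ^ 2) ^ 2) = real m * (2 * real m - 1)"
  proof -
    have "(\<Sum>ps\<in>?A. ?p ps * (X_of n ps ^ 2) ^ 2)
        = kerov_expect (Suc m) (\<lambda>ps. (\<lambda>lam mu. cr (added_box lam mu) ^ 4) (ps ! (m - 1)) (ps ! m))"
      unfolding kerov_expect_def X_eq unfolding nm by simp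
    also have "\<dots> = PE m (\<lambda>lam. \<Sum>mu\<in>partitions_of (Suc m). tr m lam mu * cr (added_box lam mu) ^ 4)"
      by (rule kerov_two[OF m1])
    also have "\<dots> = real m * (2 * real m - 1)" by (rule EX4)
    finally show ?thesis .
  qed
  have ETX: "(\<Sum>ps\<in>?A. ?p ps * (\<bar>T_of n ps\<bar> * \<bar>X_of n ps\<bar>) ^ 2) = real m"
  proof -
    have "(\<Sum>ps\<in>?A. ?p ps * (\<bar>T_of n ps\<bar> * \<bar>X_of n ps\<bar>) ^ 2)
        = kerov_expect (Suc m) (\<lambda>ps. (\<lambda>lam mu. (S1 lam / sqrt B) ^ 2 * cr (added_box lam mu) ^ 2) (ps ! (m - 1)) (ps ! m))"
      unfolding kerov_expect_def X_eq T_eq unfolding nm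
      by (intro sum.cong refl) (simp add: power_mult_distrib power_divide)
    also have "\<dots> = PE m (\<lambda>lam. \<Sum>mu\<in>partitions_of (Suc m). tr m lam mu * ((S1 lam / sqrt B) ^ 2 * cr (added_box lam mu) ^ 2))"
      by (rule kerov_two[OF m1])
    also have "\<dots> = PE m (\<lambda>lam. (real m / B) * S1 lam ^ 2)"
    proof (rule PE_cong)
      fix lam assume lam: "lam \<in> partitions_of m"
      have "(\<Sum>mu\<in>partitions_of (Suc m). tr m lam mu * ((S1 lam / sqrt B) ^ 2 * cr (added_box lam mu) ^ 2))
          = (S1 lam / sqrt B) ^ 2 * (\<Sum>mu\<in>partitions_of (Suc m). tr m lam mu * cr (added_box lam mu) ^ 2)"
        by (simp add: sum_distrib_left algebra_simps)
      also have "\<dots> = (S1 lam / sqrt B) ^ 2 * real m" unfolding tr_mom2[OF lam] ..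
      also have "\<dots> = real m / B * S1 lam ^ 2"
        using Bp by (simp add: power_divide)
      finally show "(\<Sum>mu\<in>partitions_of (Suc m). tr m lam mu * ((S1 lam / sqrt B) ^ 2 * cr (added_box lam mu) ^ 2))
          = real m / B * S1 lam ^ 2" .
    qed
    also have "\<dots> = real m / B * (real m * (real m - 1) / 2)"
      unfolding PE_cmult PE_S1sq ..
    also have "\<dots> = real m" unfolding Bv using m2 by (simp add: field_simps)
    finally show ?thesis .
  qed
  define R where "R = real (n - 1) * sqrt (2 * real n - 3)"
  have R2: "R ^ 2 = real m * (real m * (2 * real m - 1))"
    unfolding R_def nm using m2 by (simp add: power_mult_distrib algebra_simps power2_eq_square)
  have R0: "R \<ge> 0" unfolding R_def nm using m2 by simp
  have bound: "E \<le> R" if "E ^ 2 \<le> R ^ 2" for E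
  proof -
    have "\<bar>E\<bar> \<le> \<bar>R\<bar>" using that by (simp add: abs_le_square_iff)
    then show ?thesis using R0 by simp
  qed
  have part1: "kerov_expect n (\<lambda>ps. \<bar>X_of n ps\<bar> ^ 3) \<le> R"
  proof (rule bound)
    have "kerov_expect n (\<lambda>ps. \<bar>X_of n ps\<bar> ^ 3) = (\<Sum>ps\<in>?A. ?p ps * (\<bar>X_of n ps\<bar> * X_of n ps ^ 2))"
      unfolding kerov_expect_def abs_cube ..
    also have "\<dots> ^ 2 \<le> (\<Sum>ps\<in>?A. ?p ps * \<bar>X_of n ps\<bar> ^ 2) * (\<Sum>ps\<in>?A. ?p ps * (X_of n ps ^ 2) ^ 2)"
      by (rule wcs[OF fin pnn])
    also have "\<dots> = real m * (real m * (2 * real m - 1))"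
      using EX2 EX4 by simp
    finally show "(kerov_expect n (\<lambda>ps. \<bar>X_of n ps\<bar> ^ 3)) ^ 2 \<le> R ^ 2" unfolding R2 .
  qed
  have part2: "kerov_expect n (\<lambda>ps. \<bar>T_of n ps\<bar> * \<bar>X_of n ps\<bar> ^ 3) \<le> R"
  proof (rule bound)
    have "kerov_expect n (\<lambda>ps. \<bar>T_of n ps\<bar> * \<bar>X_of n ps\<bar> ^ 3)
        = (\<Sum>ps\<in>?A. ?p ps * ((\<bar>T_of n ps\<bar> * \<bar>X_of n ps\<bar>) * X_of n ps ^ 2))"
      unfolding kerov_expect_def abs_cube by (simp add: algebra_simps)
    also have "\<dots> ^ 2 \<le> (\<Sum>ps\<in>?A. ?p ps * (\<bar>T_of n ps\<bar> * \<bar>X_of n ps\<bar>) ^ 2) * (\<Sum>ps\<in>?A. ?p ps * (X_of n ps ^ 2) ^ 2)"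
      by (rule wcs[OF fin pnn])
    also have "\<dots> = real m * (real m * (2 * real m - 1))"
      using ETX EX4 by simp
    finally show "(kerov_expect n (\<lambda>ps. \<bar>T_of n ps\<bar> * \<bar>X_of n ps\<bar> ^ 3)) ^ 2 \<le> R ^ 2" unfolding R2 .
  qed
  show ?thesis using part1 part2 unfolding R_def by simp
qed

end
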